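(* Let $N,M$ be integers with $0<M<N/2$. Let $\mathbf{Str}_{00}$ (resp. $\mathbf{Str}_{11}$) be the sub-poset of $\mathbf{Str}(N,M)$ of strings $s$ with $s_1=s_N=0$ (resp. $s_1=s_N=1$), and let $\overline{\mathbf{Str}}_{00}$ (resp. $\overline{\mathbf{Str}}_{11}$) be the sub-poset of strings with $(s_1,s_N)\in\{(0,0),(0,X),(X,0)\}$ (resp. $(s_1,s_N)\in\{(1,1),(1,X),(X,1)\}$). Then the geometric realizations of $\mathbf{Str}_{00}$, $\overline{\mathbf{Str}}_{00}$, $\mathbf{Str}_{11}$ and $\overline{\mathbf{Str}}_{11}$ are contractible.
   Context: A circular symbol string of length $N$ is $s=s_1\cdots s_N$ with each $s_i\in\{0,1,X\}$, indices read cyclically modulo $N$; $0,1$ are called bits. A block of $s$ is a maximal cyclic run of consecutive equal symbols. $s$ is a circular cellular string of rank $M$ if it has exactly $M$ blocks of symbol $0$, exactly $M$ blocks of symbol $1$, and every block of symbol $X$ is cyclically preceded and followed by blocks of different bits (one of symbol $0$ and one of symbol $1$). $\mathbf{Str}(N,M)$ is the set of such strings, partially ordered by $s'<s$ iff $s$ is obtained from $s'$ by replacing some (at least one) of the bits of $s'$ by $X$. The geometric realization of a poset is that of its order complex. *)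

theory Defs
  imports "HOL-Analysis.Analysis"
begin

datatype sym = Z0 | O1 | X

text \<open>Circular strings of length N are lists of length N; paper index s_i is list index i-1.
  Cyclic neighbours are taken modulo N.\<close>

definition is_bit :: "sym \<Rightarrow> bool" where
  "is_bit c \<longleftrightarrow> c \<noteq> X"

text \<open>Number of maximal cyclic runs (blocks) of symbol c in s: the number of positions where
  a block of c starts (cyclic predecessor differs), plus one if s is constantly c
  (then the whole cycle is a single block).\<close>
definition num_blocks :: "sym list \<Rightarrow> sym \<Rightarrow> nat" where
  "num_blocks s c = card {i. i < length s \<and> s ! i = c \<and>
       s ! ((i + length s - 1) mod length s) \<noteq> c}
     + (if 0 < length s \<and> (\<forall>i<length s. s ! i = c) then 1 else 0)"

text \<open>Every X-block is cyclically preceded and followed by blocks of different bits: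
  whenever position i holds a bit, positions i+1..i+d (d \<ge> 1) hold X and position i+d+1
  holds a bit (all mod N), the two bits differ.\<close>
definition X_blocks_ok :: "sym list \<Rightarrow> bool" where
  "X_blocks_ok s \<longleftrightarrow> (let N = length s in
     \<forall>i<N. \<forall>d\<ge>1. s ! i \<noteq> X \<longrightarrow> (\<forall>k\<in>{1..d}. s ! ((i + k) mod N) = X)
        \<longrightarrow> s ! ((i + d + 1) mod N) \<noteq> X \<longrightarrow> s ! i \<noteq> s ! ((i + d + 1) mod N))"

definition Str :: "nat \<Rightarrow> nat \<Rightarrow> sym list set" where
  "Str N M = {s. length s = N \<and> num_blocks s Z0 = M \<and> num_blocks s O1 = M \<and> X_blocks_ok s}"

definition str_less :: "sym list \<Rightarrow> sym list \<Rightarrow> bool" where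
  "str_less s' s \<longleftrightarrow> length s' = length s \<and> s' \<noteq> s \<and>
     (\<forall>i<length s. s ! i = s' ! i \<or> (s ! i = X \<and> s' ! i \<noteq> X))"

text \<open>Geometric realization of the order complex of a finite poset (P, lt): the set of
  formal convex combinations of elements of P whose support is a chain, as a subspace of
  'a \<Rightarrow> real (product topology; on finitely supported points this is the Euclidean topology).\<close>
definition order_complex_realization :: "'a set \<Rightarrow> ('a \<Rightarrow> 'a \<Rightarrow> bool) \<Rightarrow> ('a \<Rightarrow> real) set" where
  "order_complex_realization P lt =
     {f. (\<forall>x. 0 \<le> f x) \<and> (\<forall>x. f x \<noteq> 0 \<longrightarrow> x \<in> P) \<and> sum f P = 1 \<and>
         (\<forall>x y. f x \<noteq> 0 \<longrightarrow> f y \<noteq> 0 \<longrightarrow> x = y \<or> lt x y \<or> lt y x)}"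

definition Str00 :: "nat \<Rightarrow> nat \<Rightarrow> sym list set" where
  "Str00 N M = {s \<in> Str N M. s ! 0 = Z0 \<and> s ! (N - 1) = Z0}"
definition Str11 :: "nat \<Rightarrow> nat \<Rightarrow> sym list set" where
  "Str11 N M = {s \<in> Str N M. s ! 0 = O1 \<and> s ! (N - 1) = O1}"
definition Str00bar :: "nat \<Rightarrow> nat \<Rightarrow> sym list set" where
  "Str00bar N M = {s \<in> Str N M. (s ! 0, s ! (N - 1)) \<in> {(Z0, Z0), (Z0, X), (X, Z0)}}"
definition Str11bar :: "nat \<Rightarrow> nat \<Rightarrow> sym list set" where
  "Str11bar N M = {s \<in> Str N M. (s ! 0, s ! (N - 1)) \<in> {(O1, O1), (O1, X), (X, O1)}}"

end

theory Submission
  imports Defs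
begin

definition push :: "'a set \<Rightarrow> ('a \<Rightarrow> 'a) \<Rightarrow> ('a \<Rightarrow> real) \<Rightarrow> ('a \<Rightarrow> real)" where
  "push P f p = (\<lambda>y. \<Sum>x\<in>{x\<in>P. f x = y}. p x)"

definition Sb :: "'a set \<Rightarrow> ('a \<Rightarrow> 'a \<Rightarrow> bool) \<Rightarrow> ('a \<Rightarrow> real) \<Rightarrow> 'a \<Rightarrow> real" where
  "Sb P lt p x = (\<Sum>z\<in>{z\<in>P. lt z x}. p z)"

definition Gt :: "'a set \<Rightarrow> ('a \<Rightarrow> 'a \<Rightarrow> bool) \<Rightarrow> real \<Rightarrow> ('a \<Rightarrow> real) \<Rightarrow> 'a \<Rightarrow> real" where
  "Gt P lt t p x = min (p x) (max 0 (t - Sb P lt p x))"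

definition hom :: "'a set \<Rightarrow> ('a \<Rightarrow> 'a \<Rightarrow> bool) \<Rightarrow> ('a \<Rightarrow> 'a) \<Rightarrow> ('a \<Rightarrow> 'a) \<Rightarrow> real \<times> ('a \<Rightarrow> real) \<Rightarrow> ('a \<Rightarrow> real)" where
  "hom P lt f g z = (\<lambda>y. (\<Sum>x\<in>{x\<in>P. f x = y}. Gt P lt (fst z) (snd z) x)
       + (\<Sum>x\<in>{x\<in>P. g x = y}. snd z x - Gt P lt (fst z) (snd z) x))"

lemma sum_fibres:
  assumes "finite P" "f ` P \<subseteq> P"
  shows "(\<Sum>y\<in>P. \<Sum>x\<in>{x\<in>P. f x = y}. h x) = (\<Sum>x\<in>P. (h x :: real))"
  using sum.group[OF assms(1) assms(1) assms(2), of h] by (simp add: eq_commute)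

lemma c1: "continuous_on S (\<lambda>z::real \<times> ('a \<Rightarrow> real). snd z x)"
proof -
  have "continuous_on S ((\<lambda>q. q x) \<circ> snd)"
    by (rule continuous_on_compose[OF continuous_on_snd[OF continuous_on_id]]) (rule continuous_on_subset[OF continuous_on_product_coordinates], simp)
  then show ?thesis by (simp add: o_def)
qed

lemma c2: "continuous_on S (\<lambda>z::real \<times> ('a \<Rightarrow> real). Gt P lt (fst z) (snd z) x)"
  unfolding Gt_def Sb_def
  apply (rule continuous_on_min[OF c1])
  apply (rule continuous_on_max[OF continuous_on_const])
  apply (rule continuous_on_diff[OF continuous_on_fst[OF continuous_on_id]])
  apply (rule continuous_on_sum)
  apply (rule c1)
  done

lemma hom_cont:
  shows "continuous_on S (hom P lt f g)"
proof (rule continuous_on_coordinatewise_then_product)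
  fix y
  show "continuous_on S (\<lambda>z. hom P lt f g z y)"
    unfolding hom_def
    apply (rule continuous_on_add)
     apply (rule continuous_on_sum, rule c2)
    apply (rule continuous_on_sum, rule continuous_on_diff[OF c1 c2])
    done
qed

locale ocx =
  fixes P :: "'a set" and lt :: "'a \<Rightarrow> 'a \<Rightarrow> bool"
  assumes finP: "finite P" and irr: "\<And>x. \<not> lt x x"
    and trn: "\<And>x y z. lt x y \<Longrightarrow> lt y z \<Longrightarrow> lt x z"
begin

abbreviation "RR \<equiv> order_complex_realization P lt"

lemma RR_D:
  assumes "p \<in> RR"
  shows "\<And>x. 0 \<le> p x" "\<And>x. p x \<noteq> 0 \<Longrightarrow> x \<in> P" "sum p P = 1"
    "\<And>x y. p x \<noteq> 0 \<Longrightarrow> p y \<noteq> 0 \<Longrightarrow> x = y \<or> lt x y \<or> lt y x"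
  using assms unfolding order_complex_realization_def by auto

lemma Sb_nonneg: "p \<in> RR \<Longrightarrow> 0 \<le> Sb P lt p x"
  unfolding Sb_def by (intro sum_nonneg) (use RR_D(1) in auto)

lemma Sb_le1: assumes "p \<in> RR" "x \<in> P" shows "Sb P lt p x + p x \<le> 1"
proof -
  have "Sb P lt p x + p x = sum p (insert x {z\<in>P. lt z x})"
    unfolding Sb_def using finP irr by (subst sum.insert) auto
  also have "\<dots> \<le> sum p P"
    using assms finP RR_D(1)[OF assms(1)] by (intro sum_mono2) auto
  finally show ?thesis using RR_D(3)[OF assms(1)] by simp
qed

lemma Sb_lt: assumes "p \<in> RR" "x \<in> P" "y \<in> P" "lt y x" shows "Sb P lt p y + p y \<le> Sb P lt p x"
proof -
  have "Sb P lt p y + p y = sum p (insert y {z\<in>P. lt z y})"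
    unfolding Sb_def using finP irr by (subst sum.insert) auto
  also have "\<dots> \<le> Sb P lt p x" unfolding Sb_def
  proof (rule sum_mono2)
    show "insert y {z \<in> P. lt z y} \<subseteq> {z \<in> P. lt z x}" using assms(3,4) trn[OF _ assms(4)] by auto
  qed (use assms finP RR_D(1)[OF assms(1)] in auto)
  finally show ?thesis .
qed

definition "le x y \<longleftrightarrow> x = y \<or> lt x y"

lemma le_trans: "le x y \<Longrightarrow> le y z \<Longrightarrow> le x z"
  unfolding le_def using trn by blast

lemma hom_in:
  assumes fP: "f ` P \<subseteq> P" and gP: "g ` P \<subseteq> P"
    and monof: "\<And>x y. x \<in> P \<Longrightarrow> y \<in> P \<Longrightarrow> lt x y \<Longrightarrow> le (f x) (f y)"
    and monog: "\<And>x y. x \<in> P \<Longrightarrow> y \<in> P \<Longrightarrow> lt x y \<Longrightarrow> le (g x) (g y)"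
    and fg: "\<And>x. x \<in> P \<Longrightarrow> le (f x) (g x)"
    and p: "p \<in> RR" and t: "0 \<le> t" "t \<le> 1"
  shows "hom P lt f g (t, p) \<in> RR"
proof -
  let ?G = "Gt P lt t p"
  have G0: "0 \<le> ?G x" for x using RR_D(1)[OF p, of x] unfolding Gt_def by auto
  have Gp: "?G x \<le> p x" for x unfolding Gt_def by auto
  have Gnz: "t > Sb P lt p x \<and> p x \<noteq> 0" if "?G x \<noteq> 0" for x
    using that RR_D(1)[OF p, of x] unfolding Gt_def by (auto simp: min_def max_def split: if_splits)
  have Gnz2: "t < Sb P lt p x + p x \<and> p x \<noteq> 0" if "p x - ?G x \<noteq> 0" for x
    using that RR_D(1)[OF p, of x] unfolding Gt_def by (auto simp: min_def max_def split: if_splits)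
  let ?h = "hom P lt f g (t, p)"
  have h_eq: "?h y = (\<Sum>x\<in>{x\<in>P. f x = y}. ?G x) + (\<Sum>x\<in>{x\<in>P. g x = y}. p x - ?G x)" for y
    by (simp add: hom_def)
  have nn: "0 \<le> ?h x" for x unfolding h_eq
    using G0 Gp by (intro add_nonneg_nonneg sum_nonneg) (auto simp: algebra_simps)
  have wit: "(\<exists>x\<in>P. f x = y \<and> ?G x \<noteq> 0) \<or> (\<exists>x\<in>P. g x = y \<and> p x - ?G x \<noteq> 0)" if "?h y \<noteq> 0" for y
  proof (rule ccontr)
    assume "\<not> ?thesis"
    then have "\<forall>x\<in>{x\<in>P. f x = y}. ?G x = 0" "\<forall>x\<in>{x\<in>P. g x = y}. p x - ?G x = 0" by auto
    then have "?h y = 0" unfolding h_eq by (simp only: sum.neutral) 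
    with that show False by simp
  qed
  have supp: "x \<in> P" if "?h x \<noteq> 0" for x
    using wit[OF that] fP gP by (metis image_subset_iff)
  have sum1: "sum ?h P = 1"
  proof -
    have "sum ?h P = (\<Sum>y\<in>P. \<Sum>x\<in>{x\<in>P. f x = y}. ?G x) + (\<Sum>y\<in>P. \<Sum>x\<in>{x\<in>P. g x = y}. p x - ?G x)"
      unfolding h_eq by (simp add: sum.distrib)
    also have "\<dots> = sum ?G P + (\<Sum>x\<in>P. p x - ?G x)"
      by (simp add: sum_fibres[OF finP fP] sum_fibres[OF finP gP])
    also have "\<dots> = sum p P" by (simp add: sum_subtractf)
    finally show ?thesis using RR_D(3)[OF p] by simp
  qed
  have cross: "le (f x1) (g x2)" if "x1 \<in> P" "x2 \<in> P" "?G x1 \<noteq> 0" "p x2 - ?G x2 \<noteq> 0" for x1 x2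
  proof -
    from Gnz[OF that(3)] Gnz2[OF that(4)] have a: "t > Sb P lt p x1" "p x1 \<noteq> 0" "t < Sb P lt p x2 + p x2" "p x2 \<noteq> 0" by auto
    from RR_D(4)[OF p a(2) a(4)] consider "x1 = x2" | "lt x1 x2" | "lt x2 x1" by blast
    then show ?thesis
    proof cases
      case 1 then show ?thesis using fg that by simp
    next
      case 2 show ?thesis by (rule le_trans[OF monof[OF that(1,2) 2] fg[OF that(2)]])
    next
      case 3 then show ?thesis using Sb_lt[OF p that(1,2) 3] a by simp
    qed
  qed
  have chain: "x = y \<or> lt x y \<or> lt y x" if "?h x \<noteq> 0" "?h y \<noteq> 0" for x y
  proof -
    have ff: "le a b \<Longrightarrow> a = b \<or> lt a b \<or> lt b a" for a b unfolding le_def by blast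
    have ff2: "le b a \<Longrightarrow> a = b \<or> lt a b \<or> lt b a" for a b unfolding le_def by blast
    from wit[OF that(1)] wit[OF that(2)] show ?thesis
    proof (elim disjE bexE conjE)
      fix x1 x2 assume *: "x1 \<in> P" "f x1 = x" "?G x1 \<noteq> 0" "x2 \<in> P" "f x2 = y" "?G x2 \<noteq> 0"
      have "p x1 \<noteq> 0" "p x2 \<noteq> 0" using Gnz *(3,6) by auto
      from RR_D(4)[OF p this] consider "x1 = x2" | "lt x1 x2" | "lt x2 x1" by blast
      then show ?thesis
      proof cases
        case 1 then show ?thesis using * by simp
      next
        case 2 then show ?thesis using monof[OF *(1,4) 2] *(2,5) unfolding le_def by auto
      next
        case 3 then show ?thesis using monof[OF *(4,1) 3] *(2,5) unfolding le_def by auto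
      qed
    next
      fix x1 x2 assume *: "x1 \<in> P" "g x1 = x" "p x1 - ?G x1 \<noteq> 0" "x2 \<in> P" "g x2 = y" "p x2 - ?G x2 \<noteq> 0"
      have "p x1 \<noteq> 0" "p x2 \<noteq> 0" using Gnz2 *(3,6) by auto
      from RR_D(4)[OF p this] consider "x1 = x2" | "lt x1 x2" | "lt x2 x1" by blast
      then show ?thesis
      proof cases
        case 1 then show ?thesis using * by simp
      next
        case 2 then show ?thesis using monog[OF *(1,4) 2] *(2,5) unfolding le_def by auto
      next
        case 3 then show ?thesis using monog[OF *(4,1) 3] *(2,5) unfolding le_def by auto
      qed
    next
      fix x1 x2 assume *: "x1 \<in> P" "f x1 = x" "?G x1 \<noteq> 0" "x2 \<in> P" "g x2 = y" "p x2 - ?G x2 \<noteq> 0"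
      then show ?thesis using cross[OF *(1,4,3,6)] *(2,5) unfolding le_def by auto
    next
      fix x1 x2 assume *: "x1 \<in> P" "g x1 = x" "p x1 - ?G x1 \<noteq> 0" "x2 \<in> P" "f x2 = y" "?G x2 \<noteq> 0"
      then show ?thesis using cross[OF *(4,1,6,3)] *(2,5) unfolding le_def by auto
    qed
  qed
  show ?thesis unfolding order_complex_realization_def mem_Collect_eq
    apply (intro conjI allI impI)
       apply (rule nn)
      apply (erule supp)
     apply (rule sum1)
    apply (erule (1) chain)
    done
qed


lemma hom_0: assumes p: "p \<in> RR" shows "hom P lt f g (0, p) = push P g p"
proof -
  have "Gt P lt 0 p x = 0" for x using Sb_nonneg[OF p, of x] RR_D(1)[OF p, of x] unfolding Gt_def by auto
  then show ?thesis unfolding hom_def push_def by simp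
qed

lemma hom_1: assumes p: "p \<in> RR" shows "hom P lt f g (1, p) = push P f p"
proof -
  have "Gt P lt 1 p x = p x" if "x \<in> P" for x using Sb_le1[OF p that] RR_D(1)[OF p, of x] unfolding Gt_def by auto
  then show ?thesis unfolding hom_def push_def by (auto intro!: sum.cong ext)
qed

lemma homotopic_push:
  assumes fP: "f ` P \<subseteq> P" and gP: "g ` P \<subseteq> P"
    and monof: "\<And>x y. x \<in> P \<Longrightarrow> y \<in> P \<Longrightarrow> lt x y \<Longrightarrow> le (f x) (f y)"
    and monog: "\<And>x y. x \<in> P \<Longrightarrow> y \<in> P \<Longrightarrow> lt x y \<Longrightarrow> le (g x) (g y)"
    and fg: "\<And>x. x \<in> P \<Longrightarrow> le (f x) (g x)"
  shows "homotopic_with_canon (\<lambda>_. True) RR RR (push P g) (push P f)"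
proof (subst homotopic_with, simp, intro exI conjI ballI)
  show "continuous_map (prod_topology (top_of_set {0..1}) (top_of_set RR)) (top_of_set RR) (hom P lt f g)"
    using hom_in[OF fP gP monof monog fg] by (auto simp: hom_cont)
qed (auto simp: hom_0 hom_1)

end


fun fl :: "sym \<Rightarrow> sym" where
  "fl Z0 = O1" | "fl O1 = Z0" | "fl X = X"

lemma fl_fl[simp]: "fl (fl c) = c" by (cases c) auto
lemma fl_neq[simp]: "c \<noteq> X \<Longrightarrow> fl c \<noteq> c" by (cases c) auto
lemma fl_X[simp]: "fl c = X \<longleftrightarrow> c = X" by (cases c) auto
lemma bit_cases: "c \<noteq> X \<Longrightarrow> d \<noteq> X \<Longrightarrow> d \<noteq> c \<Longrightarrow> d = fl c"
  by (cases c; cases d) auto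

definition pw :: "sym list \<Rightarrow> sym list \<Rightarrow> bool" where
  "pw s' s \<longleftrightarrow> length s' = length s \<and> (\<forall>i<length s. s ! i = s' ! i \<or> (s ! i = X \<and> s' ! i \<noteq> X))"

lemma pw_refl[simp]: "pw s s" by (simp add: pw_def)

lemma pw_nth: "pw s' s \<Longrightarrow> i < length s \<Longrightarrow> s ! i = s' ! i \<or> (s ! i = X \<and> s' ! i \<noteq> X)"
  unfolding pw_def by blast

lemma pw_bit: "pw s' s \<Longrightarrow> i < length s \<Longrightarrow> s ! i \<noteq> X \<Longrightarrow> s' ! i = s ! i"
  using pw_nth[of s' s i] by auto

lemma str_less_pw: "str_less s' s \<Longrightarrow> pw s' s"
  unfolding str_less_def pw_def by auto

lemma pw_le: "pw s' s \<Longrightarrow> s' = s \<or> str_less s' s"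
  unfolding str_less_def pw_def by auto

lemma pw_antisym: assumes "pw a b" "pw b a" shows "a = b"
proof (rule nth_equalityI)
  show "length a = length b" using assms(1) by (simp add: pw_def)
  fix i assume "i < length a"
  then have "i < length b" using assms(1) by (simp add: pw_def)
  then show "a ! i = b ! i" using pw_nth[OF assms(1)] pw_nth[OF assms(2)] \<open>i < length a\<close> by force
qed

lemma pw_trans: assumes "pw a b" "pw b c" shows "pw a c"
  unfolding pw_def
proof (intro conjI allI impI)
  show "length a = length c" using assms by (simp add: pw_def)
  fix i assume i: "i < length c"
  then have "i < length b" using assms by (simp add: pw_def)
  then show "c ! i = a ! i \<or> c ! i = X \<and> a ! i \<noteq> X"
    using pw_nth[OF assms(1), of i] pw_nth[OF assms(2), of i] i by force
qed

lemma str_less_irr: "\<not> str_less x x" by (simp add: str_less_def)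

lemma str_less_trans: assumes "str_less x y" "str_less y z" shows "str_less x z"
proof -
  have p: "pw x y" "pw y z" using assms by (auto intro: str_less_pw)
  then have "pw x z" by (rule pw_trans)
  moreover have "x \<noteq> z"
  proof
    assume "x = z"
    then have "x = y" using p pw_antisym by blast
    then show False using assms(1) by (simp add: str_less_def)
  qed
  ultimately show ?thesis unfolding str_less_def pw_def by auto
qed

definition lin_ok :: "sym list \<Rightarrow> bool" where
  "lin_ok s \<longleftrightarrow> (\<forall>i j. i + 1 < j \<and> j < length s \<and> s ! i \<noteq> X \<and> s ! j \<noteq> X \<and>
      (\<forall>l. i < l \<and> l < j \<longrightarrow> s ! l = X) \<longrightarrow> s ! i \<noteq> s ! j)"

lemma lin_okD: "lin_ok s \<Longrightarrow> i + 1 < j \<Longrightarrow> j < length s \<Longrightarrow> s ! i \<noteq> X \<Longrightarrow> s ! j \<noteq> X \<Longrightarrow>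
      (\<And>l. i < l \<Longrightarrow> l < j \<Longrightarrow> s ! l = X) \<Longrightarrow> s ! i \<noteq> s ! j"
  unfolding lin_ok_def by blast

lemma XB_D:
  assumes "X_blocks_ok s" "i < length s" "1 \<le> d" "s ! i \<noteq> X"
    "\<forall>k\<in>{1..d}. s ! ((i + k) mod length s) = X" "s ! ((i + d + 1) mod length s) \<noteq> X"
  shows "s ! i \<noteq> s ! ((i + d + 1) mod length s)"
  using assms unfolding X_blocks_ok_def Let_def by blast

lemma XB_lin:
  assumes "X_blocks_ok s" "i + 1 < j" "j < length s" "s ! i \<noteq> X" "s ! j \<noteq> X"
    "\<And>l. i < l \<Longrightarrow> l < j \<Longrightarrow> s ! l = X"
  shows "s ! i \<noteq> s ! j"
proof -
  let ?N = "length s" and ?d = "j - i - 1"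
  have "i < ?N" "?d \<ge> 1" using assms by auto
  moreover have "\<forall>k\<in>{1..?d}. s ! ((i + k) mod ?N) = X"
    using assms(2,3,6) by auto
  moreover have "(i + ?d + 1) mod ?N = j" using assms(2,3) by auto
  ultimately show ?thesis using XB_D[OF assms(1), of i ?d] assms(4,5) by simp
qed

lemma XB_wrap1:
  assumes "X_blocks_ok s" "0 < j" "j < length s" "s ! (length s - 1) \<noteq> X" "s ! j \<noteq> X"
    "\<And>l. l < j \<Longrightarrow> s ! l = X"
  shows "s ! (length s - 1) \<noteq> s ! j"
proof -
  let ?N = "length s" 
  have N: "?N - 1 < ?N" using assms by auto
  moreover have "\<forall>k\<in>{1..j}. s ! ((?N - 1 + k) mod ?N) = X"
  proof
    fix k assume k: "k \<in> {1..j}"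
    then have e: "?N - 1 + k = (k - 1) + ?N" using assms(3) by auto
    have kj: "k \<le> j" "j < ?N" using k assms(3) by auto
    have "(?N - 1 + k) mod ?N = k - 1" by (simp only: e mod_add_self2) (rule mod_less, use kj in linarith)
    then show "s ! ((?N - 1 + k) mod ?N) = X" using assms(6) k by auto
  qed
  moreover have "(?N - 1 + j + 1) mod ?N = j" using assms(2,3) by simp
  moreover have "1 \<le> j" using assms(2) by simp
  ultimately show ?thesis using XB_D[OF assms(1), of "?N - 1" j] assms(4,5) by simp
qed

lemma XB_wrap2:
  assumes "X_blocks_ok s" "i + 1 < length s" "s ! i \<noteq> X" "s ! 0 \<noteq> X"
    "\<And>l. i < l \<Longrightarrow> l < length s \<Longrightarrow> s ! l = X"
  shows "s ! i \<noteq> s ! 0"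
proof -
  let ?N = "length s" and ?d = "length s - 1 - i"
  have "i < ?N" "?d \<ge> 1" using assms by auto
  moreover have "\<forall>k\<in>{1..?d}. s ! ((i + k) mod ?N) = X"
    using assms(2,5) by auto
  moreover have e2: "i + ?d + 1 = ?N" using assms(2) by simp
  have "(i + ?d + 1) mod ?N = 0" by (simp only: e2 mod_self)
  ultimately show ?thesis using XB_D[OF assms(1), of i ?d] assms(3,4) by simp
qed

lemma lin_XB:
  assumes "lin_ok s" "0 < length s" "s ! 0 \<noteq> X" "s ! (length s - 1) \<noteq> X"
  shows "X_blocks_ok s"
  unfolding X_blocks_ok_def Let_def
proof (intro allI impI)
  fix i d
  let ?N = "length s"
  assume i: "i < ?N" and d: "1 \<le> d" and si: "s ! i \<noteq> X"
    and xs: "\<forall>k\<in>{1..d}. s ! ((i + k) mod ?N) = X" and sj: "s ! ((i + d + 1) mod ?N) \<noteq> X"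
  have lt: "i + d < ?N - 1"
  proof (rule ccontr)
    assume "\<not> ?thesis"
    show False
    proof (cases "i = ?N - 1")
      case True
      then have e3: "i + 1 = ?N" using i by simp
      have "(i + 1) mod ?N = 0" by (simp only: e3 mod_self)
      moreover have "(1::nat) \<in> {1..d}" using d by simp
      ultimately show False using xs assms(3) by force
    next
      case False
      then have k: "?N - 1 - i \<in> {1..d}" using i \<open>\<not> i + d < ?N - 1\<close> by auto
      have "(i + (?N - 1 - i)) mod ?N = ?N - 1" using i False by auto
      then show False using xs k assms(4) by force
    qed
  qed
  have m: "(i + k) mod ?N = i + k" if "k \<le> d + 1" for k using lt that by auto
  show "s ! i \<noteq> s ! ((i + d + 1) mod ?N)"
    unfolding m[of "d+1", simplified add.assoc[symmetric], OF order_refl]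
  proof (rule lin_okD[OF assms(1)])
    show "i + 1 < i + d + 1" using d by simp
    show "i + d + 1 < ?N" using lt by simp
    show "s ! i \<noteq> X" by fact
    show "s ! (i + d + 1) \<noteq> X" using sj m[of "d+1"] by (simp add: add.assoc)
    fix l assume "i < l" "l < i + d + 1"
    then have "l - i \<in> {1..d}" by auto
    moreover have "i + (l - i) = l" using \<open>i < l\<close> by simp
    moreover have "l - i \<le> d + 1" using \<open>l < i + d + 1\<close> by simp
    ultimately show "s ! l = X" using xs m[of "l - i"] by force
  qed
qed

definition starts :: "sym list \<Rightarrow> sym \<Rightarrow> nat set" where
  "starts s c = {i. 0 < i \<and> i < length s \<and> s ! i = c \<and> s ! (i - 1) \<noteq> c}"

lemma finite_starts[simp]: "finite (starts s c)" unfolding starts_def by auto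

definition cst :: "sym list \<Rightarrow> sym \<Rightarrow> nat set" where
  "cst s c = {i. i < length s \<and> s ! i = c \<and> s ! ((i + length s - 1) mod length s) \<noteq> c}"

lemma num_blocks_cst: "(\<exists>i<length s. s ! i \<noteq> c) \<Longrightarrow> num_blocks s c = card (cst s c)"
  unfolding num_blocks_def cst_def by auto

lemma pred_mod: assumes "0 < i" "i < N" shows "(i + N - Suc 0) mod N = i - Suc 0"
proof -
  have e: "i + N - Suc 0 = (i - Suc 0) + N" using assms by simp
  show ?thesis using assms by (simp only: e mod_add_self2) simp
qed

lemma cst_starts:
  assumes "0 < length s" "s ! 0 = s ! (length s - 1)"
  shows "cst s c = starts s c"
proof -
  have "i \<in> cst s c \<longleftrightarrow> i \<in> starts s c" for i
  proof (cases "i = 0")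
    case True
    then show ?thesis using assms unfolding cst_def starts_def by auto
  next
    case False
    then show ?thesis unfolding cst_def starts_def by (auto simp: pred_mod)
  qed
  then show ?thesis by blast
qed


lemma last_bit:
  assumes "lin_ok s" "i < length s" "s ! i \<noteq> X" "0 < i" "s ! (i - 1) = X" "q < i" "s ! q \<noteq> X"
  shows "\<exists>p. p + 1 < i \<and> s ! p \<noteq> X \<and> (\<forall>l. p < l \<and> l < i \<longrightarrow> s ! l = X) \<and> s ! p \<noteq> s ! i"
proof -
  let ?P = "\<lambda>p. p < i \<and> s ! p \<noteq> X"
  define p where "p = Greatest ?P"
  have bd: "\<And>y. ?P y \<Longrightarrow> y \<le> i" by simp
  have Pp: "?P p" unfolding p_def by (rule GreatestI_nat[of ?P q i]) (use assms(6,7) in auto)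
  have mx: "y \<le> p" if "?P y" for y unfolding p_def by (rule Greatest_le_nat[of ?P y i]) (use that in auto)
  have "p \<noteq> i - 1" using Pp assms(5) by auto
  then have p1: "p + 1 < i" using Pp by auto
  have btw: "\<forall>l. p < l \<and> l < i \<longrightarrow> s ! l = X"
  proof (intro allI impI)
    fix l assume "p < l \<and> l < i"
    then show "s ! l = X" using mx[of l] by force
  qed
  have "s ! p \<noteq> s ! i"
    by (rule lin_okD[OF assms(1) p1 assms(2)]) (use Pp assms(3) btw in auto)
  then show ?thesis using p1 Pp btw by blast
qed

locale sset =
  fixes N M :: nat and b :: sym
  assumes M0: "0 < M" and MN: "2 * M < N" and bX: "b \<noteq> X"
begin

definition Q :: "sym list set" where
  "Q = {s \<in> Str N M. s ! 0 = b \<and> s ! (N - 1) = b}"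

lemma N2: "2 < N" using M0 MN by linarith

lemma Q_char: "s \<in> Q \<longleftrightarrow> length s = N \<and> s ! 0 = b \<and> s ! (N - 1) = b \<and> lin_ok s \<and>
    card (starts s Z0) = M \<and> card (starts s O1) = M"
proof
  assume s: "s \<in> Q"
  then have L: "length s = N" and e: "s ! 0 = b" "s ! (N - 1) = b" and xb: "X_blocks_ok s"
    and nb: "num_blocks s Z0 = M" "num_blocks s O1 = M" by (auto simp: Q_def Str_def)
  have lin: "lin_ok s" unfolding lin_ok_def
  proof (intro allI impI)
    fix i j assume "i + 1 < j \<and> j < length s \<and> s ! i \<noteq> X \<and> s ! j \<noteq> X \<and> (\<forall>l. i < l \<and> l < j \<longrightarrow> s ! l = X)"
    then show "s ! i \<noteq> s ! j" using XB_lin[OF xb] by blast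
  qed
  have ne: "\<exists>i<length s. s ! i \<noteq> c" if "c = Z0 \<or> c = O1" for c
  proof (rule ccontr)
    assume "\<not> ?thesis"
    then have all: "\<forall>i<length s. s ! i = c" by blast
    define c' where "c' = fl c"
    have "c' \<noteq> c" "c' \<noteq> X" using that by (auto simp: c'_def)
    have "num_blocks s c' = 0" unfolding num_blocks_def
      using all \<open>c' \<noteq> c\<close> L N2 by auto
    moreover have "num_blocks s c' = M" using nb that by (auto simp: c'_def)
    ultimately show False using M0 by simp
  qed
  have cs: "cst s c = starts s c" for c by (rule cst_starts) (use L e N2 in auto)
  have "card (starts s Z0) = M" using num_blocks_cst[OF ne[of Z0]] nb cs by simp
  moreover have "card (starts s O1) = M" using num_blocks_cst[OF ne[of O1]] nb cs by simp
  ultimately show "length s = N \<and> s ! 0 = b \<and> s ! (N - 1) = b \<and> lin_ok s \<and>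
    card (starts s Z0) = M \<and> card (starts s O1) = M" using L e lin by simp
next
  assume A: "length s = N \<and> s ! 0 = b \<and> s ! (N - 1) = b \<and> lin_ok s \<and>
    card (starts s Z0) = M \<and> card (starts s O1) = M"
  then have L: "length s = N" and e: "s ! 0 = b" "s ! (N - 1) = b" and lin: "lin_ok s"
    and cd: "card (starts s Z0) = M" "card (starts s O1) = M" by auto
  have xb: "X_blocks_ok s" by (rule lin_XB[OF lin]) (use L e N2 bX in auto)
  have ne: "\<exists>i<length s. s ! i \<noteq> c" if "card (starts s c) = M" for c
  proof (rule ccontr)
    assume "\<not> ?thesis"
    then have all: "\<forall>i<length s. s ! i = c" by blast
    have "starts s c = {}" unfolding starts_def using all by auto
    then show False using that M0 by simp
  qed
  have cs: "cst s c = starts s c" for c by (rule cst_starts) (use L e N2 in auto)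
  have "num_blocks s Z0 = M" using num_blocks_cst[OF ne[OF cd(1)]] cd cs by simp
  moreover have "num_blocks s O1 = M" using num_blocks_cst[OF ne[OF cd(2)]] cd cs by simp
  ultimately show "s \<in> Q" unfolding Q_def Str_def using L e xb by auto
qed

end

lemma card_odd: "card {i::nat. i < k \<and> odd i} = k div 2"
proof (induction k)
  case 0 then show ?case by simp
next
  case (Suc k)
  show ?case
  proof (cases "odd k")
    case True
    have "{i. i < Suc k \<and> odd i} = insert k {i. i < k \<and> odd i}" using True by auto
    then show ?thesis using Suc True by (simp add: odd_two_times_div_two_succ)
  next
    case False
    have "{i. i < Suc k \<and> odd i} = {i. i < k \<and> odd i}" using False less_Suc_eq by auto
    then show ?thesis using Suc False by simp
  qed
qed

lemma fl_X2[simp]: "X = fl c \<longleftrightarrow> c = X" by (cases c) auto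

definition fill :: "sym list \<Rightarrow> nat \<Rightarrow> nat \<Rightarrow> sym \<Rightarrow> sym list" where
  "fill t k r v = map (\<lambda>i. if k \<le> i \<and> i < r then v else t ! i) [0..<length t]"

lemma fill_len[simp]: "length (fill t k r v) = length t" by (simp add: fill_def)
lemma fill_nth: "i < length t \<Longrightarrow> fill t k r v ! i = (if k \<le> i \<and> i < r then v else t ! i)"
  by (simp add: fill_def)

lemma bit_other: "c \<noteq> X \<Longrightarrow> d \<noteq> X \<Longrightarrow> d \<noteq> fl c \<Longrightarrow> d = c"
  by (cases c; cases d) auto

context sset
begin

definition alt :: "nat \<Rightarrow> sym" where "alt i = (if even i then b else fl b)"

lemma alt_X[simp]: "alt i \<noteq> X" using bX by (simp add: alt_def)
lemma alt_Suc: "alt (Suc i) = fl (alt i)" by (simp add: alt_def)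
lemma alt_pred: "0 < k \<Longrightarrow> alt (k - 1) = fl (alt k)"
  by (cases k) (auto simp: alt_Suc)
lemma b_fl: "fl b \<noteq> b" "b \<noteq> fl b" using fl_neq[OF bX] by auto
lemma alt_flb: "alt i = fl b \<longleftrightarrow> odd i" using b_fl by (auto simp: alt_def)
lemma alt_b: "alt i = b \<longleftrightarrow> even i" using b_fl by (auto simp: alt_def)

definition D :: "nat \<Rightarrow> sym list set" where
  "D k = {t \<in> Q. \<forall>i<k. t ! i = alt i}"

definition rr :: "nat \<Rightarrow> sym list \<Rightarrow> nat" where
  "rr k t = (LEAST i. k \<le> i \<and> t ! i = alt k)"

definition EE :: "nat \<Rightarrow> sym list \<Rightarrow> sym list" where
  "EE k t = fill t k (rr k t) X"

definition CC :: "nat \<Rightarrow> sym list \<Rightarrow> sym list" where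
  "CC k t = fill t k (rr k t) (alt k)"

lemma card_starts_bit: "t \<in> Q \<Longrightarrow> c \<noteq> X \<Longrightarrow> card (starts t c) = M"
  using Q_char by (cases c) auto

lemma Q_len: "t \<in> Q \<Longrightarrow> length t = N" using Q_char by auto
lemma Q_lin: "t \<in> Q \<Longrightarrow> lin_ok t" using Q_char by auto
lemma Q_0: "t \<in> Q \<Longrightarrow> t ! 0 = b" using Q_char by auto
lemma Q_N: "t \<in> Q \<Longrightarrow> t ! (N - 1) = b" using Q_char by auto

lemma ex_r:
  assumes t: "t \<in> D k" and k: "1 \<le> k" "k \<le> 2 * M"
  shows "\<exists>i. k \<le> i \<and> i < N \<and> t ! i = alt k"
proof (cases "even k")
  case True
  then show ?thesis using Q_N[of t] t k MN by (intro exI[of _ "N - 1"]) (auto simp: D_def alt_def)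
next
  case False
  show ?thesis
  proof (rule ccontr)
    assume no: "\<not> ?thesis"
    have tQ: "t \<in> Q" using t by (simp add: D_def)
    have "starts t (fl b) \<subseteq> {i. i < k \<and> odd i}"
    proof
      fix i assume i: "i \<in> starts t (fl b)"
      then have "i < N" "t ! i = fl b" using Q_len[OF tQ] by (auto simp: starts_def)
      have ak: "alt k = fl b" using False alt_flb by simp
      have "i < k"
      proof (rule ccontr)
        assume "\<not> i < k"
        then have "k \<le> i \<and> i < N \<and> t ! i = alt k" using \<open>i < N\<close> \<open>t ! i = fl b\<close> ak by simp
        then show False using no by blast
      qed
      then have "t ! i = alt i" using t by (simp add: D_def)
      then show "i \<in> {i. i < k \<and> odd i}" using \<open>i < k\<close> \<open>t ! i = fl b\<close> alt_flb by auto
    qed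
    then have "card (starts t (fl b)) \<le> k div 2"
      using card_mono[of "{i. i < k \<and> odd i}"] card_odd[of k] by auto
    moreover have "card (starts t (fl b)) = M" using card_starts_bit[OF tQ] bX by simp
    moreover have "k div 2 < M" using k False by presburger
    ultimately show False by simp
  qed
qed

lemma r_props:
  assumes t: "t \<in> D k" and k: "1 \<le> k" "k \<le> 2 * M"
  shows "k \<le> rr k t" "rr k t < N" "t ! rr k t = alt k" "\<And>i. k \<le> i \<Longrightarrow> i < rr k t \<Longrightarrow> t ! i \<noteq> alt k"
proof -
  obtain i0 where i0: "k \<le> i0" "i0 < N" "t ! i0 = alt k" using ex_r[OF assms] by blast
  have P: "k \<le> rr k t \<and> t ! rr k t = alt k" unfolding rr_def by (rule LeastI[of _ i0]) (use i0 in auto)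
  then show "k \<le> rr k t" "t ! rr k t = alt k" by auto
  have "rr k t \<le> i0" unfolding rr_def by (rule Least_le) (use i0 in auto)
  then show "rr k t < N" using i0 by simp
  fix i assume "k \<le> i" "i < rr k t"
  then show "t ! i \<noteq> alt k" using not_less_Least[of i "\<lambda>i. k \<le> i \<and> t ! i = alt k"] unfolding rr_def by auto
qed

lemma region:
  assumes t: "t \<in> D k" and k: "1 \<le> k" "k \<le> 2 * M"
  shows "t ! (k - 1) = fl (alt k)"
    "\<And>i. k \<le> i \<Longrightarrow> i < rr k t \<Longrightarrow> t ! i = fl (alt k) \<or> t ! i = X"
    "\<And>i. k \<le> i \<Longrightarrow> i < rr k t \<Longrightarrow> t ! i = fl (alt k) \<Longrightarrow> t ! (i - 1) = fl (alt k)"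
proof -
  have tQ: "t \<in> Q" using t by (simp add: D_def)
  show km: "t ! (k - 1) = fl (alt k)" using t k alt_pred[of k] by (simp add: D_def)
  show reg: "t ! i = fl (alt k) \<or> t ! i = X" if "k \<le> i" "i < rr k t" for i
    using r_props(4)[OF assms that] bit_cases[of "alt k" "t ! i"] by auto
  fix i assume i: "k \<le> i" "i < rr k t" "t ! i = fl (alt k)"
  show "t ! (i - 1) = fl (alt k)"
  proof (cases "i = k")
    case True then show ?thesis using km by simp
  next
    case False
    then have ik: "k \<le> i - 1" "i - 1 < rr k t" using i by auto
    show ?thesis
    proof (rule ccontr)
      assume ne: "t ! (i - 1) \<noteq> fl (alt k)"
      then have X: "t ! (i - 1) = X" using reg[OF ik] by simp
      have iN: "i < length t" using r_props(2)[OF assms] i Q_len[OF tQ] by simp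
      have q: "k - 1 < i" using ik k by simp
      have ne1: "t ! i \<noteq> X" using i(3) alt_X[of k] fl_X by metis
      have i0: "0 < i" using ik k by simp
      have qb: "t ! (k - 1) \<noteq> X" using km alt_X[of k] fl_X by metis
      obtain p where p: "p + 1 < i" "t ! p \<noteq> X" "\<forall>l. p < l \<and> l < i \<longrightarrow> t ! l = X" "t ! p \<noteq> t ! i"
        using last_bit[OF Q_lin[OF tQ] iN ne1 i0 X q qb] by blast
      have pc: "t ! p = alt k" using p(2,4) i(3) bit_other[of "alt k" "t ! p"] by simp
      show False
      proof (cases "p < k - 1")
        case True
        then have "t ! (k - 1) = X" using p(3) ik by auto
        then show False using km by simp
      next
        case False
        then consider "p = k - 1" | "k \<le> p" by linarith
        then show False
        proof cases
          case 1 then show False using km pc by simp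
        next
          case 2 then show False using r_props(4)[OF assms 2] pc p(1) i(2) by simp
        qed
      qed
    qed
  qed
qed

lemma regc:
  assumes t: "t \<in> D k" and k: "1 \<le> k" "k \<le> 2 * M"
  shows "k \<le> j \<Longrightarrow> j < rr k t \<Longrightarrow> t ! j = fl (alt k) \<Longrightarrow> k \<le> l \<Longrightarrow> l \<le> j \<Longrightarrow> t ! l = fl (alt k)"
proof (induction j arbitrary: l)
  case 0 then show ?case by simp
next
  case (Suc j)
  show ?case
  proof (cases "l = Suc j")
    case True then show ?thesis using Suc by simp
  next
    case False
    then have kj: "k \<le> j" using Suc.prems by simp
    have jr: "j < rr k t" using Suc.prems by simp
    have lj: "l \<le> j" using Suc.prems False by simp
    have tj: "t ! j = fl (alt k)" using region(3)[OF assms, of "Suc j"] Suc.prems by simp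
    show ?thesis by (rule Suc.IH[OF kj jr tj Suc.prems(4) lj])
  qed
qed

lemma regX:
  assumes t: "t \<in> D k" and k: "1 \<le> k" "k \<le> 2 * M"
    and ij: "k \<le> i" "i \<le> j" "j < rr k t" and X: "t ! i = X"
  shows "t ! j = X"
proof (rule ccontr)
  assume "t ! j \<noteq> X"
  then have "t ! j = fl (alt k)" using region(2)[OF assms(1-3), of j] ij by auto
  then have "t ! i = fl (alt k)" using regc[OF assms(1-3), of j i] ij by auto
  then show False using X alt_X[of k] fl_X by metis
qed

end

lemma starts_eqI:
  assumes "length e = length t"
    "\<And>i. 0 < i \<Longrightarrow> i < length t \<Longrightarrow> (e ! i = c0 \<and> e ! (i - 1) \<noteq> c0) \<longleftrightarrow> (t ! i = c0 \<and> t ! (i - 1) \<noteq> c0)"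
  shows "starts e c0 = starts t c0"
  using assms unfolding starts_def by auto

lemma inj_starts:
  assumes pw: "pw t' t" and lin: "lin_ok t" and t0: "t ! 0 \<noteq> X" and cX: "c \<noteq> X"
  shows "\<exists>\<phi>. inj_on \<phi> (starts t c) \<and> \<phi> ` starts t c \<subseteq> starts t' c \<and>
     (\<forall>i\<in>starts t c. \<phi> i \<le> i \<and> (\<forall>l. \<phi> i \<le> l \<and> l \<le> i \<longrightarrow> t' ! l = c))"
proof -
  have L: "length t' = length t" using pw by (simp add: pw_def)
  define \<phi> where "\<phi> i = (LEAST j. j \<le> i \<and> (\<forall>l. j \<le> l \<and> l \<le> i \<longrightarrow> t' ! l = c))" for i
  have basic: "\<phi> i \<le> i \<and> (\<forall>l. \<phi> i \<le> l \<and> l \<le> i \<longrightarrow> t' ! l = c)" if i: "i \<in> starts t c" for i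
  proof -
    have "i < length t" "t ! i = c" using i by (auto simp: starts_def)
    then have "t' ! i = c" using pw_bit[OF pw] cX by simp
    then have "i \<le> i \<and> (\<forall>l. i \<le> l \<and> l \<le> i \<longrightarrow> t' ! l = c)" by auto
    then show ?thesis unfolding \<phi>_def by (rule LeastI)
  qed
  have below: "\<exists>l<i. t' ! l \<noteq> c \<and> t ! l \<noteq> X \<and> t ! l \<noteq> c" if i: "i \<in> starts t c" for i
  proof -
    have i': "0 < i" "i < length t" "t ! i = c" "t ! (i - 1) \<noteq> c" using i by (auto simp: starts_def)
    show ?thesis
    proof (cases "t ! (i - 1) = X")
      case False
      then show ?thesis using i' pw_bit[OF pw, of "i - 1"] by (intro exI[of _ "i - 1"]) auto
    next
      case True
      obtain p where p: "p + 1 < i" "t ! p \<noteq> X" "t ! p \<noteq> t ! i"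
        using last_bit[OF lin i'(2) _ i'(1) True i'(1) t0] i'(3) cX by blast
      then show ?thesis using pw_bit[OF pw, of p] i' by (intro exI[of _ p]) auto
    qed
  qed
  have img: "\<phi> i \<in> starts t' c" if i: "i \<in> starts t c" for i
  proof -
    have i': "0 < i" "i < length t" using i by (auto simp: starts_def)
    obtain l where l: "l < i" "t' ! l \<noteq> c" using below[OF i] by blast
    have b: "\<phi> i \<le> i" "\<forall>l. \<phi> i \<le> l \<and> l \<le> i \<longrightarrow> t' ! l = c" using basic[OF i] by auto
    have "l < \<phi> i"
    proof (rule ccontr)
      assume "\<not> l < \<phi> i"
      then show False using b(2) l by auto
    qed
    then have pos: "0 < \<phi> i" by simp
    have "t' ! (\<phi> i - 1) \<noteq> c"
    proof
      assume tc: "t' ! (\<phi> i - 1) = c"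
      have "\<phi> i - 1 \<le> i \<and> (\<forall>l. \<phi> i - 1 \<le> l \<and> l \<le> i \<longrightarrow> t' ! l = c)"
      proof (intro conjI allI impI)
        show "\<phi> i - 1 \<le> i" using b(1) by simp
        fix l assume "\<phi> i - 1 \<le> l \<and> l \<le> i"
        then show "t' ! l = c" using b(2) tc by (cases "l = \<phi> i - 1") auto
      qed
      moreover have "\<phi> i - 1 < \<phi> i" using pos by simp
      ultimately show False using not_less_Least[of "\<phi> i - 1" "\<lambda>j. j \<le> i \<and> (\<forall>l. j \<le> l \<and> l \<le> i \<longrightarrow> t' ! l = c)"]
        unfolding \<phi>_def by blast
    qed
    then show ?thesis using pos b i' L unfolding starts_def by auto
  qed
  have inj_lt: False if i1: "i1 \<in> starts t c" and i2: "i2 \<in> starts t c" and lt: "i1 < i2" and eq: "\<phi> i1 = \<phi> i2" for i1 i2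
  proof -
    have a1: "t ! i1 = c" using i1 by (auto simp: starts_def)
    have a2: "0 < i2" "i2 < length t" "t ! i2 = c" "t ! (i2 - 1) \<noteq> c" using i2 by (auto simp: starts_def)
    have allc: "\<forall>l. i1 \<le> l \<and> l \<le> i2 \<longrightarrow> t' ! l = c" using basic[OF i1] basic[OF i2] eq by auto
    show False
    proof (cases "t ! (i2 - 1) = X")
      case False
      then have "t' ! (i2 - 1) \<noteq> c" using pw_bit[OF pw, of "i2 - 1"] a2 by auto
      then show False using allc lt by auto
    next
      case True
      have "t ! i1 \<noteq> X" using a1 cX by simp
      then obtain p where p: "p + 1 < i2" "t ! p \<noteq> X" "\<forall>l. p < l \<and> l < i2 \<longrightarrow> t ! l = X" "t ! p \<noteq> t ! i2"
        using last_bit[OF lin a2(2) _ a2(1) True lt] a2(3) cX by blast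
      have "i1 \<le> p"
      proof (rule ccontr)
        assume "\<not> i1 \<le> p"
        then have "t ! i1 = X" using p(3) lt by auto
        then show False using a1 cX by simp
      qed
      moreover have "t' ! p \<noteq> c" using pw_bit[OF pw, of p] p a2 by auto
      ultimately show False using allc p(1) by auto
    qed
  qed
  have "inj_on \<phi> (starts t c)"
  proof (rule inj_onI)
    fix i1 i2 assume "i1 \<in> starts t c" "i2 \<in> starts t c" "\<phi> i1 = \<phi> i2"
    then show "i1 = i2" using inj_lt[of i1 i2] inj_lt[of i2 i1] by (metis linorder_neqE_nat)
  qed
  then show ?thesis using img basic by (intro exI[of _ \<phi>]) auto
qed


context sset
begin

context
  fixes k :: nat and t :: "sym list"
  assumes tD: "t \<in> D k" and k1: "1 \<le> k" and k2: "k \<le> 2 * M"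
begin

lemma tQ: "t \<in> Q" using tD by (simp add: D_def)
lemma tL: "length t = N" using Q_len[OF tQ] .
lemmas rp = r_props[OF tD k1 k2]
lemmas rg = region[OF tD k1 k2]

lemma EE_nth: "i < N \<Longrightarrow> EE k t ! i = (if k \<le> i \<and> i < rr k t then X else t ! i)"
  unfolding EE_def using tL by (simp add: fill_nth)
lemma CC_nth: "i < N \<Longrightarrow> CC k t ! i = (if k \<le> i \<and> i < rr k t then alt k else t ! i)"
  unfolding CC_def using tL by (simp add: fill_nth)
lemma EE_in: "i < N \<Longrightarrow> k \<le> i \<Longrightarrow> i < rr k t \<Longrightarrow> EE k t ! i = X"
  using EE_nth by simp
lemma EE_out: "i < N \<Longrightarrow> \<not> (k \<le> i \<and> i < rr k t) \<Longrightarrow> EE k t ! i = t ! i"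
  using EE_nth by (simp only: if_not_P if_False)
lemma CC_in: "i < N \<Longrightarrow> k \<le> i \<Longrightarrow> i < rr k t \<Longrightarrow> CC k t ! i = alt k"
  using CC_nth by simp
lemma CC_out: "i < N \<Longrightarrow> \<not> (k \<le> i \<and> i < rr k t) \<Longrightarrow> CC k t ! i = t ! i"
  using CC_nth by (simp only: if_not_P if_False)
lemma EE_len: "length (EE k t) = N" unfolding EE_def using tL by simp
lemma CC_len: "length (CC k t) = N" unfolding CC_def using tL by simp

lemma EE_starts:
  assumes c0: "c0 \<noteq> X"
  shows "starts (EE k t) c0 = starts t c0"
proof (rule starts_eqI)
  show "length (EE k t) = length t" using EE_len tL by simp
  fix i assume i: "0 < i" "i < length t"
  let ?r = "rr k t" and ?c = "alt k"
  have iN: "i < N" "i - 1 < N" using i tL by auto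
  consider "k \<le> i \<and> i < ?r" | "i = ?r" | "i < k \<or> ?r < i" by linarith
  then show "(EE k t ! i = c0 \<and> EE k t ! (i - 1) \<noteq> c0) \<longleftrightarrow> (t ! i = c0 \<and> t ! (i - 1) \<noteq> c0)"
  proof cases
    case 1
    have l: "\<not> (EE k t ! i = c0)" using EE_nth[OF iN(1)] 1 c0 by simp
    have "\<not> (t ! i = c0 \<and> t ! (i - 1) \<noteq> c0)"
    proof
      assume a: "t ! i = c0 \<and> t ! (i - 1) \<noteq> c0"
      then have "t ! i = fl ?c" using rg(2)[of i] 1 c0 by auto
      then have "t ! (i - 1) = fl ?c" using rg(3)[of i] 1 by auto
      then show False using a \<open>t ! i = fl ?c\<close> by simp
    qed
    then show ?thesis using l by simp
  next
    case 2
    have e1: "EE k t ! i = t ! i" using EE_out[OF iN(1)] 2 by simp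
    show ?thesis
    proof (cases "k < ?r")
      case True
      have rg1: "k \<le> i - 1" "i - 1 < ?r" using 2 True by auto
      have "EE k t ! (i - 1) = X" using EE_in[OF iN(2) rg1] .
      moreover have "t ! (i - 1) \<noteq> ?c" using rp(4)[OF rg1] .
      ultimately show ?thesis using e1 2 rp(3) c0 by auto
    next
      case False
      then have "\<not> (k \<le> i - 1 \<and> i - 1 < ?r)" using 2 rp(1) k1 by auto
      then have "EE k t ! (i - 1) = t ! (i - 1)" using EE_out[OF iN(2)] by blast
      then show ?thesis using e1 by simp
    qed
  next
    case 3
    then have "\<not> (k \<le> i \<and> i < ?r)" "\<not> (k \<le> i - 1 \<and> i - 1 < ?r)" using i by auto
    then have "EE k t ! i = t ! i" "EE k t ! (i - 1) = t ! (i - 1)"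
      using EE_out[OF iN(1)] EE_out[OF iN(2)] by blast+
    then show ?thesis by simp
  qed
qed

lemma EE_lin: "lin_ok (EE k t)"
  unfolding lin_ok_def
proof (intro allI impI)
  fix i j
  let ?e = "EE k t" and ?r = "rr k t"
  assume a: "i + 1 < j \<and> j < length ?e \<and> ?e ! i \<noteq> X \<and> ?e ! j \<noteq> X \<and> (\<forall>l. i < l \<and> l < j \<longrightarrow> ?e ! l = X)"
  then have jN: "j < N" and ij: "i + 1 < j" and bi: "?e ! i \<noteq> X" and bj: "?e ! j \<noteq> X"
    and btw: "\<And>l. i < l \<Longrightarrow> l < j \<Longrightarrow> ?e ! l = X" using EE_len by auto
  have iN: "i < N" using ij jN by simp
  have ni: "\<not> (k \<le> i \<and> i < ?r)" using bi EE_nth[OF iN] by auto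
  have nj: "\<not> (k \<le> j \<and> j < ?r)" using bj EE_nth[OF jN] by auto
  have ei: "?e ! i = t ! i" "?e ! j = t ! j" using EE_out[OF iN ni] EE_out[OF jN nj] by auto
  have same: "?e ! l = t ! l" if "l < k \<or> ?r \<le> l" "l < N" for l using EE_out[OF that(2)] that(1) by auto
  consider "j < k" | "?r \<le> i" | "i < k \<and> ?r \<le> j" using ni nj by linarith
  then show "?e ! i \<noteq> ?e ! j"
  proof cases
    case 1
    have "t ! i \<noteq> t ! j"
      by (rule lin_okD[OF Q_lin[OF tQ] ij]) (use jN tL ei bi bj btw same 1 in auto)
    then show ?thesis using ei by simp
  next
    case 2
    have "t ! i \<noteq> t ! j"
      by (rule lin_okD[OF Q_lin[OF tQ] ij]) (use jN tL ei bi bj btw same 2 in auto)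
    then show ?thesis using ei by simp
  next
    case 3
    have "i = k - 1"
    proof (rule ccontr)
      assume "i \<noteq> k - 1"
      then have "i < k - 1" using 3 by arith
      moreover have "k - 1 < j" using 3 k1 rp(1) by arith
      ultimately have "?e ! (k - 1) = X" using btw by simp
      moreover have "?e ! (k - 1) = t ! (k - 1)" using same[of "k - 1"] k1 k2 MN by simp
      ultimately show False using rg(1) by simp
    qed
    moreover have "j = ?r"
    proof (rule ccontr)
      assume "j \<noteq> ?r"
      then have "?r < j" using 3 by simp
      moreover have "i < ?r" using 3 rp(1) k1 by simp
      ultimately have "?e ! ?r = X" using btw by simp
      moreover have "?e ! ?r = t ! ?r" using same[of ?r] rp(2) by simp
      ultimately show False using rp(3) by simp
    qed
    ultimately show ?thesis using ei rg(1) rp(3) by simp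
  qed
qed

lemma EE_Q: "EE k t \<in> Q"
proof -
  have "EE k t ! 0 = b" using EE_nth[of 0] N2 k1 Q_0[OF tQ] by simp
  moreover have "\<not> (k \<le> N - 1 \<and> N - 1 < rr k t)" using rp(2) by arith
  then have "EE k t ! (N - 1) = b" using EE_out[of "N - 1"] N2 Q_N[OF tQ] by simp
  moreover have "card (starts (EE k t) c) = M" if "c \<noteq> X" for c
    using EE_starts[OF that] card_starts_bit[OF tQ that] by simp
  ultimately show ?thesis unfolding Q_char using EE_len EE_lin by simp
qed

lemma EE_pw: "pw t (EE k t)"
  unfolding pw_def using EE_len tL EE_nth rg(2) by auto

lemma CC_pw: "pw (CC k t) (EE k t)"
  unfolding pw_def using EE_len CC_len EE_nth CC_nth by auto


lemma CC_starts_other: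
  assumes c0: "c0 \<noteq> X" "c0 \<noteq> alt k"
  shows "starts (CC k t) c0 = starts t c0"
proof (rule starts_eqI)
  show "length (CC k t) = length t" using CC_len tL by simp
  fix i assume i: "0 < i" "i < length t"
  let ?r = "rr k t" and ?c = "alt k"
  have iN: "i < N" "i - 1 < N" using i tL by auto
  have c0f: "c0 = fl ?c" using bit_cases[of ?c c0] c0 by simp
  consider "k \<le> i \<and> i < ?r" | "i = ?r" | "i < k \<or> ?r < i" by linarith
  then show "(CC k t ! i = c0 \<and> CC k t ! (i - 1) \<noteq> c0) \<longleftrightarrow> (t ! i = c0 \<and> t ! (i - 1) \<noteq> c0)"
  proof cases
    case 1
    have l: "CC k t ! i \<noteq> c0" using CC_in[OF iN(1)] 1 c0 by simp
    have "\<not> (t ! i = c0 \<and> t ! (i - 1) \<noteq> c0)"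
    proof
      assume a: "t ! i = c0 \<and> t ! (i - 1) \<noteq> c0"
      then have "t ! (i - 1) = fl ?c" using rg(3)[of i] 1 c0f by auto
      then show False using a c0f by simp
    qed
    then show ?thesis using l by simp
  next
    case 2
    have "CC k t ! i = ?c" using CC_out[OF iN(1)] 2 rp(3) by simp
    then show ?thesis using 2 rp(3) c0 by simp
  next
    case 3
    then have "\<not> (k \<le> i \<and> i < ?r)" "\<not> (k \<le> i - 1 \<and> i - 1 < ?r)" using i by auto
    then have "CC k t ! i = t ! i" "CC k t ! (i - 1) = t ! (i - 1)"
      using CC_out[OF iN(1)] CC_out[OF iN(2)] by blast+
    then show ?thesis by simp
  qed
qed

lemma r_start: "rr k t \<in> starts t (alt k)"
proof -
  let ?r = "rr k t"
  have "t ! (?r - 1) \<noteq> alt k"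
  proof (cases "k < ?r")
    case True
    then show ?thesis using rp(4)[of "?r - 1"] by simp
  next
    case False
    then have "?r = k" using rp(1) by simp
    then show ?thesis using rg(1) by simp
  qed
  then show ?thesis unfolding starts_def using rp tL k1 by auto
qed

lemma CC_starts_c: "starts (CC k t) (alt k) = insert k (starts t (alt k) - {rr k t})"
proof -
  let ?r = "rr k t" and ?c = "alt k" and ?u = "CC k t"
  have "i \<in> starts ?u ?c \<longleftrightarrow> i \<in> insert k (starts t ?c - {?r})" for i
  proof (cases "0 < i \<and> i < N")
    case False
    then have "i \<noteq> k" using k1 k2 MN by auto
    then show ?thesis using False tL CC_len unfolding starts_def by auto
  next
    case True
    then have iN: "i < N" "i - 1 < N" "0 < i" by auto
    consider "i = k" | "k < i \<and> i \<le> ?r" | "i < k \<or> ?r < i" by linarith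
    then show ?thesis
    proof cases
      case 1
      have a: "?u ! i = ?c"
      proof (cases "k < ?r")
        case True then show ?thesis using CC_in[OF iN(1)] 1 by simp
      next
        case False
        then have "?r = k" using rp(1) by simp
        then show ?thesis using CC_out[OF iN(1)] 1 rp(3) by simp
      qed
      have "\<not> (k \<le> i - 1 \<and> i - 1 < ?r)" using 1 k1 by arith
      then have "?u ! (i - 1) = t ! (k - 1)" using CC_out[OF iN(2)] 1 by simp
      then have "?u ! (i - 1) \<noteq> ?c" using rg(1) by simp
      then show ?thesis using a iN CC_len 1 unfolding starts_def by auto
    next
      case 2
      have rg2: "k \<le> i - 1" "i - 1 < ?r" using 2 by auto
      have "?u ! (i - 1) = ?c" using CC_in[OF iN(2) rg2] .
      then have l: "i \<notin> starts ?u ?c" unfolding starts_def by auto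
      have "i \<notin> starts t ?c - {?r}"
      proof
        assume "i \<in> starts t ?c - {?r}"
        then have "t ! i = ?c" "i \<noteq> ?r" unfolding starts_def by auto
        then show False using rp(4)[of i] 2 by simp
      qed
      then show ?thesis using l 2 by simp
    next
      case 3
      then have "\<not> (k \<le> i \<and> i < ?r)" "\<not> (k \<le> i - 1 \<and> i - 1 < ?r)" using iN by auto
      then have e: "?u ! i = t ! i" "?u ! (i - 1) = t ! (i - 1)"
        using CC_out[OF iN(1)] CC_out[OF iN(2)] by blast+
      have "i \<noteq> k" "i \<noteq> ?r" using 3 rp(1) by auto
      then show ?thesis using e iN tL CC_len unfolding starts_def by auto
    qed
  qed
  then show ?thesis by blast
qed

lemma CC_card_c: "card (starts (CC k t) (alt k)) = card (starts t (alt k))"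
proof (cases "k = rr k t")
  case True
  then show ?thesis using CC_starts_c r_start by (simp add: insert_absorb)
next
  case False
  have "k \<notin> starts t (alt k)" using rp(4)[of k] rp(1) False unfolding starts_def by auto
  then have "card (insert k (starts t (alt k) - {rr k t})) = Suc (card (starts t (alt k) - {rr k t}))"
    by simp
  also have "\<dots> = card (starts t (alt k))" using r_start card_Diff1_less[of "starts t (alt k)" "rr k t"]
    by (simp add: card_Diff_singleton)
  finally show ?thesis using CC_starts_c by simp
qed

lemma CC_lin: "lin_ok (CC k t)"
  unfolding lin_ok_def
proof (intro allI impI)
  fix i j
  let ?e = "CC k t" and ?r = "rr k t"
  assume a: "i + 1 < j \<and> j < length ?e \<and> ?e ! i \<noteq> X \<and> ?e ! j \<noteq> X \<and> (\<forall>l. i < l \<and> l < j \<longrightarrow> ?e ! l = X)"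
  then have jN: "j < N" and ij: "i + 1 < j" and bi: "?e ! i \<noteq> X" and bj: "?e ! j \<noteq> X"
    and btw: "\<And>l. i < l \<Longrightarrow> l < j \<Longrightarrow> ?e ! l = X" using CC_len by auto
  have iN: "i < N" using ij jN by simp
  have same: "?e ! l = t ! l" if "l < k \<or> ?r \<le> l" "l < N" for l using CC_out[OF that(2)] that(1) by auto
  have bitreg: "?e ! l \<noteq> X" if "k \<le> l" "l \<le> ?r" "l < N" for l
  proof (cases "l < ?r")
    case True then show ?thesis using CC_in[OF that(3) that(1) True] by simp
  next
    case False then show ?thesis using same[of l] that rp(3) by simp
  qed
  consider "j < k" | "?r \<le> i" | "i < k \<and> k \<le> j" | "k \<le> i \<and> i < ?r" by linarith
  then show "?e ! i \<noteq> ?e ! j"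
  proof cases
    case 1
    have ei: "?e ! i = t ! i" "?e ! j = t ! j" using same[of i] same[of j] 1 iN jN ij by auto
    have bt: "t ! l = X" if "i < l" "l < j" for l using btw[OF that] same[of l] 1 that jN ij by auto
    have "t ! i \<noteq> t ! j"
      by (rule lin_okD[OF Q_lin[OF tQ] ij]) (use jN tL bi bj ei bt in auto)
    then show ?thesis using ei by simp
  next
    case 2
    have ei: "?e ! i = t ! i" "?e ! j = t ! j" using same[of i] same[of j] 2 iN jN ij by auto
    have bt: "t ! l = X" if "i < l" "l < j" for l using btw[OF that] same[of l] 2 that jN ij by auto
    have "t ! i \<noteq> t ! j"
      by (rule lin_okD[OF Q_lin[OF tQ] ij]) (use jN tL bi bj ei bt in auto)
    then show ?thesis using ei by simp
  next
    case 3
    show ?thesis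
    proof (cases "j = k")
      case True
      then have "i < k - 1" "k - 1 < j" using ij 3 by auto
      then have "?e ! (k - 1) = X" using btw by simp
      moreover have "?e ! (k - 1) = t ! (k - 1)" using same[of "k - 1"] k1 k2 MN by simp
      ultimately show ?thesis using rg(1) by simp
    next
      case False
      then have "i < k" "k < j" using 3 by auto
      then have "?e ! k = X" using btw by simp
      moreover have "?e ! k \<noteq> X" using bitreg[of k] rp(1) k2 MN by simp
      ultimately show ?thesis by simp
    qed
  next
    case 4
    then have "i < i + 1" "i + 1 < j" using ij by auto
    then have "?e ! (i + 1) = X" using btw by simp
    moreover have "?e ! (i + 1) \<noteq> X" using bitreg[of "i + 1"] 4 rp(2) by simp
    ultimately show ?thesis by simp
  qed
qed

lemma CC_D: "CC k t \<in> D (Suc k)"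
proof -
  have "\<not> (k \<le> 0 \<and> 0 < rr k t)" using k1 by simp
  then have c0: "CC k t ! 0 = b" using CC_out[of 0] N2 Q_0[OF tQ] by simp
  have "\<not> (k \<le> N - 1 \<and> N - 1 < rr k t)" using rp(2) by arith
  then have cN: "CC k t ! (N - 1) = b" using CC_out[of "N - 1"] N2 Q_N[OF tQ] by simp
  have cd: "card (starts (CC k t) c) = M" if "c \<noteq> X" for c
  proof (cases "c = alt k")
    case True
    then show ?thesis using CC_card_c card_starts_bit[OF tQ that] by simp
  next
    case False
    then show ?thesis using CC_starts_other[OF that False] card_starts_bit[OF tQ that] by simp
  qed
  have Q: "CC k t \<in> Q" unfolding Q_char using CC_len CC_lin c0 cN cd by simp
  have "CC k t ! i = alt i" if "i < Suc k" for i
  proof (cases "i < k")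
    case True
    then have "\<not> (k \<le> i \<and> i < rr k t)" by simp
    then show ?thesis using CC_out[of i] True tD k2 MN by (simp add: D_def)
  next
    case False
    then have ik: "i = k" using that by simp
    show ?thesis
    proof (cases "k < rr k t")
      case True then show ?thesis using CC_in[of k] ik k2 MN by simp
    next
      case False
      then have "rr k t = k" using rp(1) by simp
      then show ?thesis using CC_out[of k] ik k2 MN rp(3) by simp
    qed
  qed
  then show ?thesis using Q by (simp add: D_def)
qed

end
end

context sset
begin

lemma rr_mono:
  assumes t: "t \<in> D k" and t': "t' \<in> D k" and k: "1 \<le> k" "k \<le> 2 * M" and pw: "pw t' t"
  shows "rr k t' \<le> rr k t"
proof -
  have "t' ! rr k t = alt k"
    using pw_bit[OF pw, of "rr k t"] r_props[OF t k] tL[OF t k] by simp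
  then show ?thesis unfolding rr_def[of k t'] by (intro Least_le) (use r_props(1)[OF t k] in simp)
qed

lemma EE_mono:
  assumes t: "t \<in> D k" and t': "t' \<in> D k" and k: "1 \<le> k" "k \<le> 2 * M" and pw: "pw t' t"
  shows "pw (EE k t') (EE k t)"
  unfolding pw_def
proof (intro conjI allI impI)
  show "length (EE k t') = length (EE k t)" using EE_len[OF t k] EE_len[OF t' k] by simp
  fix i assume "i < length (EE k t)"
  then have i: "i < N" using EE_len[OF t k] by simp
  have rm: "rr k t' \<le> rr k t" by (rule rr_mono[OF assms])
  show "EE k t ! i = EE k t' ! i \<or> EE k t ! i = X \<and> EE k t' ! i \<noteq> X"
  proof (cases "k \<le> i \<and> i < rr k t")
    case True
    then show ?thesis using EE_in[OF t k i] by auto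
  next
    case False
    then have "\<not> (k \<le> i \<and> i < rr k t')" using rm by auto
    then have "EE k t' ! i = t' ! i" "EE k t ! i = t ! i"
      using EE_out[OF t' k i] EE_out[OF t k i] False by auto
    then show ?thesis using pw i tL[OF t k] unfolding pw_def by auto
  qed
qed

lemma tail:
  assumes t: "t \<in> D k" and t': "t' \<in> D k" and k: "1 \<le> k" "k \<le> 2 * M" and pw: "pw t' t"
    and l: "rr k t' \<le> l" "l < rr k t"
  shows "t' ! l = alt k"
proof (rule ccontr)
  assume ne: "t' ! l \<noteq> alt k"
  let ?c = "alt k" and ?r = "rr k t" and ?r' = "rr k t'"
  have tQ: "t \<in> Q" and t'Q: "t' \<in> Q" using t t' by (auto simp: D_def)
  obtain \<phi> where inj: "inj_on \<phi> (starts t ?c)" and img: "\<phi> ` starts t ?c \<subseteq> starts t' ?c"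
    and phprop: "\<forall>i\<in>starts t ?c. \<phi> i \<le> i \<and> (\<forall>l. \<phi> i \<le> l \<and> l \<le> i \<longrightarrow> t' ! l = ?c)"
    using inj_starts[OF pw Q_lin[OF tQ], of ?c] Q_0[OF tQ] bX by auto
  have rs: "?r' \<in> starts t' ?c" using r_start[OF t' k] .
  have "?r' \<notin> \<phi> ` starts t ?c"
  proof
    assume "?r' \<in> \<phi> ` starts t ?c"
    then obtain i where i0: "?r' = \<phi> i" "i \<in> starts t ?c" by (rule imageE)
    then have i: "i \<in> starts t ?c" "\<phi> i = ?r'" by auto
    have "t ! i = ?c" using i by (simp add: starts_def)
    moreover have "k \<le> i" using phprop i r_props(1)[OF t' k] by force
    ultimately have "?r \<le> i" using r_props(4)[OF t k, of i] by (metis not_le)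
    then show False using phprop i l ne by force
  qed
  then have "\<phi> ` starts t ?c \<subseteq> starts t' ?c - {?r'}" using img by blast
  then have "card (\<phi> ` starts t ?c) \<le> card (starts t' ?c - {?r'})" by (intro card_mono) auto
  moreover have "card (\<phi> ` starts t ?c) = card (starts t ?c)" using card_image[OF inj] .
  moreover have "card (starts t' ?c - {?r'}) = card (starts t' ?c) - 1" using rs by simp
  moreover have "card (starts t ?c) = M" "card (starts t' ?c) = M"
    using card_starts_bit[OF tQ] card_starts_bit[OF t'Q] by auto
  ultimately show False using M0 by simp
qed

lemma CC_mono:
  assumes t: "t \<in> D k" and t': "t' \<in> D k" and k: "1 \<le> k" "k \<le> 2 * M" and pw: "pw t' t"
  shows "pw (CC k t') (CC k t)"
  unfolding pw_def
proof (intro conjI allI impI)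
  show "length (CC k t') = length (CC k t)" using CC_len[OF t k] CC_len[OF t' k] by simp
  fix i assume "i < length (CC k t)"
  then have i: "i < N" using CC_len[OF t k] by simp
  have rm: "rr k t' \<le> rr k t" by (rule rr_mono[OF assms])
  show "CC k t ! i = CC k t' ! i \<or> CC k t ! i = X \<and> CC k t' ! i \<noteq> X"
  proof (cases "k \<le> i \<and> i < rr k t")
    case True
    have a: "CC k t ! i = alt k" using CC_in[OF t k i] True by simp
    show ?thesis
    proof (cases "i < rr k t'")
      case True
      then show ?thesis using a CC_in[OF t' k i] \<open>k \<le> i \<and> i < rr k t\<close> by simp
    next
      case False
      then have "CC k t' ! i = t' ! i" using CC_out[OF t' k i] by simp
      also have "\<dots> = alt k" using tail[OF assms, of i] False True by simp
      finally show ?thesis using a by simp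
    qed
  next
    case False
    then have "\<not> (k \<le> i \<and> i < rr k t')" using rm by auto
    then have "CC k t' ! i = t' ! i" "CC k t ! i = t ! i"
      using CC_out[OF t' k i] CC_out[OF t k i] False by auto
    then show ?thesis using pw i tL[OF t k] unfolding pw_def by auto
  qed
qed

lemma D_last:
  assumes t: "t \<in> D (2 * M + 1)" and i: "i < N"
  shows "t ! i = (if i \<le> 2 * M then alt i else b)"
proof -
  have tQ: "t \<in> Q" using t by (simp add: D_def)
  have pre: "t ! i = alt i" if "i \<le> 2 * M" for i using t that by (simp add: D_def)
  let ?O = "{i. i < 2 * M \<and> odd i}"
  have sub: "?O \<subseteq> starts t (fl b)"
  proof
    fix i assume "i \<in> ?O"
    then have i: "i < 2 * M" "odd i" by auto
    then have "0 < i" by (cases i) auto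
    then have "t ! i = fl b" "t ! (i - 1) = b" using pre[of i] pre[of "i - 1"] i alt_flb alt_b by auto
    then show "i \<in> starts t (fl b)" unfolding starts_def using i MN tL b_fl \<open>0 < i\<close> Q_len[OF tQ] by auto
  qed
  have "card ?O = M" using card_odd[of "2 * M"] by simp
  moreover have "card (starts t (fl b)) = M" using card_starts_bit[OF tQ] bX by simp
  ultimately have eqO: "starts t (fl b) = ?O" using card_subset_eq[OF _ sub] by simp
  have tl: "t ! i = b" if "2 * M < i" "i < N" for i
    using that
  proof (induction i rule: less_induct)
    case (less i)
    have prev: "t ! (i - 1) = b"
    proof (cases "i - 1 = 2 * M")
      case True then show ?thesis using pre[of "2 * M"] alt_b by simp
    next
      case False then show ?thesis using less.IH[of "i - 1"] less.prems by simp
    qed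
    show ?case
    proof (rule ccontr)
      assume nb: "t ! i \<noteq> b"
      show False
      proof (cases "t ! i = X")
        case False
        then have "t ! i = fl b" using bit_cases[of b "t ! i"] nb bX by simp
        then have "i \<in> starts t (fl b)" unfolding starts_def using less.prems prev b_fl Q_len[OF tQ] by auto
        then show False using eqO less.prems by auto
      next
        case True
        have iN1: "i < N - 1" using Q_N[OF tQ] True less.prems bX by (cases "i = N - 1") auto
        define j where "j = (LEAST j. i < j \<and> t ! j \<noteq> X)"
        have ex: "i < N - 1 \<and> t ! (N - 1) \<noteq> X" using iN1 Q_N[OF tQ] bX by simp
        have jP: "i < j \<and> t ! j \<noteq> X" unfolding j_def by (rule LeastI[of _ "N - 1"]) (use ex in simp)
        have jle: "j \<le> N - 1" unfolding j_def by (rule Least_le) (use ex in simp)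
        have btw: "t ! l = X" if "i - 1 < l" "l < j" for l
        proof (cases "l = i")
          case True then show ?thesis using \<open>t ! i = X\<close> by simp
        next
          case False
          then have "i < l" using that by simp
          then show ?thesis using not_less_Least[of l "\<lambda>j. i < j \<and> t ! j \<noteq> X"] that(2) unfolding j_def by auto
        qed
        have "t ! (i - 1) \<noteq> t ! j"
          by (rule lin_okD[OF Q_lin[OF tQ]]) (use jP jle N2 prev bX btw less.prems Q_len[OF tQ] in auto)
        then have tj: "t ! j = fl b" using bit_cases[of b "t ! j"] jP prev bX by simp
        have "i - 1 < j - 1" using jP less.prems by arith
        moreover have "j - 1 < j" using jP by arith
        ultimately have "t ! (j - 1) = X" using btw by blast
        then have "j \<in> starts t (fl b)" unfolding starts_def using tj jP jle N2 Q_len[OF tQ] less.prems by auto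
        then show False using eqO jP less.prems by auto
      qed
    qed
  qed
  show ?thesis using pre tl i by auto
qed

lemma D_last_unique:
  assumes "t \<in> D (2 * M + 1)" "t' \<in> D (2 * M + 1)"
  shows "t = t'"
proof (rule nth_equalityI)
  show "length t = length t'" using assms by (auto simp: D_def Q_len)
  fix i assume "i < length t"
  then have "i < N" using assms by (auto simp: D_def Q_len)
  then show "t ! i = t' ! i" using D_last[OF assms(1)] D_last[OF assms(2)] by simp
qed

end

context sset
begin

definition Qbar :: "sym list set" where
  "Qbar = {s \<in> Str N M. (s ! 0, s ! (N - 1)) \<in> {(b, b), (b, X), (X, b)}}"

definition R :: "sym list \<Rightarrow> sym list" where
  "R s = map (\<lambda>i. if (i = 0 \<or> i = N - 1) \<and> s ! i = X then b else s ! i) [0..<length s]"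

lemma R_len[simp]: "length (R s) = length s" by (simp add: R_def)
lemma R_nth: "i < length s \<Longrightarrow> R s ! i = (if (i = 0 \<or> i = N - 1) \<and> s ! i = X then b else s ! i)"
  by (simp add: R_def)

lemma Q_Qbar: "Q \<subseteq> Qbar" unfolding Q_def Qbar_def by auto

lemma Qbar_D: "s \<in> Qbar \<Longrightarrow> length s = N \<and> X_blocks_ok s \<and> num_blocks s Z0 = M \<and> num_blocks s O1 = M"
  unfolding Qbar_def Str_def by auto

lemma R_pw: "s \<in> Qbar \<Longrightarrow> pw (R s) s"
  unfolding pw_def using R_nth bX by auto

lemma R_mono:
  assumes s: "s \<in> Qbar" and s': "s' \<in> Qbar" and pw: "pw s' s"
  shows "pw (R s') (R s)"
  unfolding pw_def
proof (intro conjI allI impI)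
  show "length (R s') = length (R s)" using pw by (simp add: pw_def)
  fix i assume "i < length (R s)"
  then have i: "i < length s" "i < length s'" using pw by (auto simp: pw_def)
  have e0: "s ! 0 = b \<or> s ! 0 = X" "s' ! 0 = b \<or> s' ! 0 = X" "s ! (N - 1) = b \<or> s ! (N - 1) = X"
    "s' ! (N - 1) = b \<or> s' ! (N - 1) = X" using s s' unfolding Qbar_def by auto
  show "R s ! i = R s' ! i \<or> R s ! i = X \<and> R s' ! i \<noteq> X"
  proof (cases "i = 0 \<or> i = N - 1")
    case True
    then have "R s ! i = b" "R s' ! i = b" using R_nth[OF i(1)] R_nth[OF i(2)] e0 by auto
    then show ?thesis by simp
  next
    case False
    then show ?thesis using R_nth[OF i(1)] R_nth[OF i(2)] pw i unfolding pw_def by auto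
  qed
qed

lemma R_Q:
  assumes s: "s \<in> Qbar"
  shows "R s \<in> Q"
proof -
  have L: "length s = N" and xb: "X_blocks_ok s" and nb: "num_blocks s Z0 = M" "num_blocks s O1 = M"
    using Qbar_D[OF s] by auto
  have nbc: "num_blocks s c = M" if "c \<noteq> X" for c using nb that by (cases c) auto
  have N1: "0 < N - 1" "N - 1 < N" using N2 by auto
  have ends: "(s ! 0, s ! (N - 1)) \<in> {(b, b), (b, X), (X, b)}" using s by (simp add: Qbar_def)
  let ?u = "R s"
  have uL: "length ?u = N" using L by simp
  have u0: "?u ! 0 = b" using R_nth[of 0 s] L N2 ends by auto
  have uN: "?u ! (N - 1) = b" using R_nth[of "N - 1" s] L N2 ends by auto
  have umid: "?u ! i = s ! i" if "0 < i" "i < N - 1" for i using R_nth[of i s] that L by auto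
  consider "s ! 0 = b" "s ! (N - 1) = b" | "s ! 0 = b" "s ! (N - 1) = X" | "s ! 0 = X" "s ! (N - 1) = b"
    using ends by auto
  then show ?thesis
  proof cases
    case 1
    have "?u = s" by (rule nth_equalityI) (use R_nth 1 L in auto)
    moreover have "s \<in> Q" using s 1 unfolding Q_def Qbar_def by auto
    ultimately show ?thesis by simp
  next
    case 2
    have us: "?u ! i = s ! i" if "i < N - 1" for i using R_nth[of i s] that L 2 by auto
    have lin: "lin_ok ?u" unfolding lin_ok_def
    proof (intro allI impI)
      fix i j assume a: "i + 1 < j \<and> j < length ?u \<and> ?u ! i \<noteq> X \<and> ?u ! j \<noteq> X \<and> (\<forall>l. i < l \<and> l < j \<longrightarrow> ?u ! l = X)"
      then have ij: "i + 1 < j" "j < N" and btw: "\<And>l. i < l \<Longrightarrow> l < j \<Longrightarrow> ?u ! l = X"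
        using uL by auto
      have "i < N - 1" using ij by arith
      then have bi: "s ! i \<noteq> X" using us[of i] a by auto
      show "?u ! i \<noteq> ?u ! j"
      proof (cases "j = N - 1")
        case True
        have "s ! i \<noteq> s ! 0"
        proof (rule XB_wrap2[OF xb])
          show "i + 1 < length s" using ij L by simp
          show "s ! i \<noteq> X" by fact
          show "s ! 0 \<noteq> X" using 2 bX by simp
          fix l assume "i < l" "l < length s"
          then show "s ! l = X"
          proof (cases "l = N - 1")
            case True then show ?thesis using 2 by simp
          next
            case False then show ?thesis using btw[of l] us[of l] \<open>i < l\<close> \<open>l < length s\<close> L \<open>j = N - 1\<close> by auto
          qed
        qed
        then show ?thesis using True us[of i] ij uN 2 by simp
      next
        case False
        have "s ! i \<noteq> s ! j"
          by (rule XB_lin[OF xb]) (use ij bi a us False L btw in auto)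
        then show ?thesis using us[of i] us[of j] ij False by simp
      qed
    qed
    have cst_o: "cst s c = starts ?u c" if "c \<noteq> X" "c \<noteq> b" for c
    proof -
      have "i \<in> cst s c \<longleftrightarrow> i \<in> starts ?u c" for i
      proof (cases "0 < i \<and> i < N - 1")
        case True
        then have "?u ! i = s ! i" "?u ! (i - 1) = s ! (i - 1)" using us by auto
        then show ?thesis unfolding cst_def starts_def using True L by (auto simp: pred_mod)
      next
        case False
        then consider "i = 0" | "i = N - 1" | "N \<le> i" by linarith
        then show ?thesis
        proof cases
          case 1 then show ?thesis unfolding cst_def starts_def using 2 that by auto
        next
          case 2 then show ?thesis unfolding cst_def starts_def using \<open>s ! (N - 1) = X\<close> uN that by auto
        next
          case 3 then show ?thesis unfolding cst_def starts_def using L by auto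
        qed
      qed
      then show ?thesis by blast
    qed
    have sN2: "s ! (N - 2) \<noteq> b"
    proof
      assume h: "s ! (N - 2) = b"
      have "s ! (N - 2) \<noteq> s ! 0"
      proof (rule XB_wrap2[OF xb])
        show "N - 2 + 1 < length s" using L N2 by simp
        show "s ! (N - 2) \<noteq> X" using h bX by simp
        show "s ! 0 \<noteq> X" using 2 bX by simp
        fix l assume "N - 2 < l" "l < length s"
        then have "l = N - 1" using L by simp
        then show "s ! l = X" using 2 by simp
      qed
      then show False using h 2 by simp
    qed
    have cst_b: "starts ?u b = insert (N - 1) (cst s b - {0})"
    proof -
      have "i \<in> starts ?u b \<longleftrightarrow> i \<in> insert (N - 1) (cst s b - {0})" for i
      proof (cases "0 < i \<and> i < N - 1")
        case True
        then have "?u ! i = s ! i" "?u ! (i - 1) = s ! (i - 1)" using us by auto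
        then show ?thesis unfolding cst_def starts_def using True L by (auto simp: pred_mod)
      next
        case False
        then consider "i = 0" | "i = N - 1" | "N \<le> i" by linarith
        then show ?thesis
        proof cases
          case 1 then show ?thesis unfolding cst_def starts_def using N2 by auto
        next
          case 3 then show ?thesis unfolding cst_def starts_def using L N2 by auto
        next
          case 4: 2
          have "N - 1 - 1 = N - 2" by simp
          then have "?u ! (N - 1 - 1) = s ! (N - 2)" using us[of "N - 2"] N2 by simp
          then show ?thesis unfolding starts_def using 4 uN sN2 N1 L by auto
        qed
      qed
      then show ?thesis by blast
    qed
    have z: "0 \<in> cst s b" unfolding cst_def using 2 L N2 bX by auto
    have nz: "N - 1 \<notin> cst s b" unfolding cst_def using 2 bX by auto
    have cd: "card (starts ?u c) = M" if "c \<noteq> X" for c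
    proof -
      have ne: "\<exists>i<length s. s ! i \<noteq> c" using 2 L N1 that by (intro exI[of _ "N - 1"]) auto
      have m: "card (cst s c) = M" using num_blocks_cst[OF ne] nbc[OF that] by simp
      show ?thesis
      proof (cases "c = b")
        case True
        have fc: "finite (cst s b)" unfolding cst_def by auto
        have "card (insert (N - 1) (cst s b - {0})) = Suc (card (cst s b - {0}))"
          using nz fc by (intro card_insert_disjoint) auto
        also have "\<dots> = Suc (card (cst s b) - 1)" using z fc by (simp add: card_Diff_singleton)
        also have "\<dots> = card (cst s b)" using z fc card_gt_0_iff[of "cst s b"] by auto
        finally show ?thesis using cst_b m True by simp
      next
        case False
        then show ?thesis using cst_o[OF that False] m by simp
      qed
    qed
    show ?thesis unfolding Q_char using uL u0 uN lin cd by auto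
  next
    case 3
    have us: "?u ! i = s ! i" if "0 < i" "i < N" for i using R_nth[of i s] that L 3 by auto
    have lin: "lin_ok ?u" unfolding lin_ok_def
    proof (intro allI impI)
      fix i j assume a: "i + 1 < j \<and> j < length ?u \<and> ?u ! i \<noteq> X \<and> ?u ! j \<noteq> X \<and> (\<forall>l. i < l \<and> l < j \<longrightarrow> ?u ! l = X)"
      then have ij: "i + 1 < j" "j < N" and bj: "s ! j \<noteq> X" and btw: "\<And>l. i < l \<Longrightarrow> l < j \<Longrightarrow> ?u ! l = X"
        using us[of j] uL by auto
      show "?u ! i \<noteq> ?u ! j"
      proof (cases "i = 0")
        case True
        have "s ! (length s - 1) \<noteq> s ! j"
        proof (rule XB_wrap1[OF xb])
          show "0 < j" "j < length s" using ij L by auto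
          show "s ! (length s - 1) \<noteq> X" using 3 L bX by simp
          show "s ! j \<noteq> X" by fact
          fix l assume "l < j"
          then show "s ! l = X"
          proof (cases "l = 0")
            case True then show ?thesis using 3 by simp
          next
            case False then show ?thesis using btw[of l] us[of l] \<open>l < j\<close> ij \<open>i = 0\<close> by auto
          qed
        qed
        then show ?thesis using True us[of j] ij u0 3 L by simp
      next
        case False
        have "s ! i \<noteq> s ! j"
          by (rule XB_lin[OF xb]) (use ij a us False L btw in auto)
        then show ?thesis using us[of i] us[of j] ij False by simp
      qed
    qed
    have s1: "s ! 1 \<noteq> b" if "s ! 1 \<noteq> X"
    proof -
      have "s ! (length s - 1) \<noteq> s ! 1"
      proof (rule XB_wrap1[OF xb])
        show "0 < (1::nat)" "1 < length s" using L N2 by auto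
        show "s ! (length s - 1) \<noteq> X" using 3 L bX by simp
        show "s ! 1 \<noteq> X" by fact
        fix l :: nat assume "l < 1" then show "s ! l = X" using 3 by simp
      qed
      then show ?thesis using 3 L by simp
    qed
    have cs: "cst s c = starts ?u c" if "c \<noteq> X" for c
    proof -
      have "i \<in> cst s c \<longleftrightarrow> i \<in> starts ?u c" for i
      proof (cases "1 < i \<and> i < N")
        case True
        then have "?u ! i = s ! i" "?u ! (i - 1) = s ! (i - 1)" using us by auto
        then show ?thesis unfolding cst_def starts_def using True L by (auto simp: pred_mod)
      next
        case False
        then consider "i = 0" | "i = 1" | "N \<le> i" by linarith
        then show ?thesis
        proof cases
          case 1 then show ?thesis unfolding cst_def starts_def using 3 that by auto
        next
          case 2
          have "?u ! 1 = s ! 1" using us[of 1] N2 by simp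
          then show ?thesis unfolding cst_def starts_def using 2 3 that s1 u0 L N2 by (auto simp: pred_mod)
        next
          case 3 then show ?thesis unfolding cst_def starts_def using L by auto
        qed
      qed
      then show ?thesis by blast
    qed
    have cd: "card (starts ?u c) = M" if "c \<noteq> X" for c
    proof -
      have ne: "\<exists>i<length s. s ! i \<noteq> c" using 3 L N2 that by (intro exI[of _ 0]) auto
      show ?thesis using num_blocks_cst[OF ne] nbc[OF that] cs[OF that] by simp
    qed
    show ?thesis unfolding Q_char using uL u0 uN lin cd by auto
  qed
qed

end

context ocx
begin

lemma push_id: assumes p: "p \<in> RR" shows "push P id p = p"
proof
  fix y
  show "push P id p y = p y"
  proof (cases "y \<in> P")
    case True
    then have "{x \<in> P. id x = y} = {y}" by auto
    then show ?thesis unfolding push_def by simp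
  next
    case False
    then have "{x \<in> P. id x = y} = {}" by auto
    moreover have "p y = 0" using RR_D(2)[OF p, of y] False by auto
    ultimately show ?thesis unfolding push_def by simp
  qed
qed

lemma push_const: assumes h: "\<And>x. x \<in> P \<Longrightarrow> h x = c" and p: "p \<in> RR"
  shows "push P h p = (\<lambda>y. if y = c then 1 else 0)"
proof
  fix y
  show "push P h p y = (if y = c then 1 else 0)"
  proof (cases "y = c")
    case True
    then have "{x \<in> P. h x = y} = P" using h by auto
    then show ?thesis unfolding push_def using RR_D(3)[OF p] True by simp
  next
    case False
    then have E: "{x \<in> P. h x = y} = {}" using h by auto
    have "push P h p y = sum p {x \<in> P. h x = y}" by (simp add: push_def)
    also have "\<dots> = 0" by (simp only: E sum.empty)
    finally show ?thesis using False by simp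
  qed
qed

lemma contractible_from:
  assumes hom: "homotopic_with_canon (\<lambda>_. True) RR RR (push P id) (push P h)"
    and h: "\<And>x. x \<in> P \<Longrightarrow> h x = c"
  shows "contractible RR"
  unfolding contractible_def
proof (intro exI)
  let ?a = "(\<lambda>y. if y = c then 1 else 0) :: 'a \<Rightarrow> real"
  have h1: "homotopic_with_canon (\<lambda>_. True) RR RR id (push P id)"
    by (rule homotopic_with_equal) (auto simp: push_id)
  have cm: "continuous_map (top_of_set RR) (top_of_set RR) (push P h)"
    using homotopic_with_imp_continuous_maps[OF hom] by simp
  have h3: "homotopic_with_canon (\<lambda>_. True) RR RR (push P h) (\<lambda>x. ?a)"
    by (rule homotopic_with_equal[OF _ _ cm]) (auto simp: push_const[OF h])
  show "homotopic_with_canon (\<lambda>x. True) RR RR id (\<lambda>x. ?a)"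
    by (rule homotopic_with_trans[OF homotopic_with_trans[OF h1 hom] h3])
qed

end

context sset
begin

lemma Q_D1: "t \<in> Q \<Longrightarrow> t \<in> D (Suc 0)"
  unfolding D_def using Q_0 by (simp add: alt_def)

lemma D_Q: "t \<in> D k \<Longrightarrow> t \<in> Q" by (simp add: D_def)

primrec Hs :: "(sym list \<Rightarrow> sym list) \<Rightarrow> nat \<Rightarrow> sym list \<Rightarrow> sym list" where
  "Hs h 0 = h"
| "Hs h (Suc k) = (\<lambda>s. CC (Suc k) (Hs h k s))"

theorem main_contr:
  assumes finP: "finite P" and QP: "Q \<subseteq> P" and H0Q: "\<And>s. s \<in> P \<Longrightarrow> H0 s \<in> Q"
    and H0pw: "\<And>s. s \<in> P \<Longrightarrow> pw (H0 s) s"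
    and H0mono: "\<And>s s'. s \<in> P \<Longrightarrow> s' \<in> P \<Longrightarrow> pw s' s \<Longrightarrow> pw (H0 s') (H0 s)"
  shows "contractible (order_complex_realization P str_less)"
proof -
  interpret ocx P str_less
    by unfold_locales (use finP str_less_irr str_less_trans in auto)
  have lepw: "le x y" if "pw x y" for x y using pw_le[OF that] unfolding le_def by simp
  have inv: "(\<forall>s\<in>P. Hs H0 k s \<in> D (Suc k)) \<and> (\<forall>s\<in>P. \<forall>s'\<in>P. pw s' s \<longrightarrow> pw (Hs H0 k s') (Hs H0 k s))"
    if "k \<le> 2 * M" for k
    using that
  proof (induction k)
    case 0
    then show ?case using H0Q Q_D1 H0mono by simp
  next
    case (Suc k)
    then have IH: "\<forall>s\<in>P. Hs H0 k s \<in> D (Suc k)" "\<forall>s\<in>P. \<forall>s'\<in>P. pw s' s \<longrightarrow> pw (Hs H0 k s') (Hs H0 k s)"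
      by auto
    have k: "1 \<le> Suc k" "Suc k \<le> 2 * M" using Suc.prems by auto
    show ?case
    proof (intro conjI ballI impI)
      fix s assume "s \<in> P"
      then show "Hs H0 (Suc k) s \<in> D (Suc (Suc k))" using CC_D[OF _ k] IH by simp
    next
      fix s s' assume "s \<in> P" "s' \<in> P" "pw s' s"
      then show "pw (Hs H0 (Suc k) s') (Hs H0 (Suc k) s)" using CC_mono[OF _ _ k] IH by simp
    qed
  qed
  have homk: "homotopic_with_canon (\<lambda>_. True) RR RR (push P id) (push P (Hs H0 k))"
    if "k \<le> 2 * M" for k
    using that
  proof (induction k)
    case 0
    have "homotopic_with_canon (\<lambda>_. True) RR RR (push P id) (push P H0)"
    proof (rule homotopic_push)
      show "H0 ` P \<subseteq> P" "id ` P \<subseteq> P" using H0Q QP by auto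
      show "le (H0 x) (H0 y)" if "x \<in> P" "y \<in> P" "str_less x y" for x y
        using lepw H0mono that str_less_pw by blast
      show "le (id x) (id y)" if "x \<in> P" "y \<in> P" "str_less x y" for x y
        using that unfolding le_def by simp
      show "le (H0 x) (id x)" if "x \<in> P" for x using lepw H0pw that by simp
    qed
    then show ?case by (simp only: Hs.simps)
  next
    case (Suc k)
    have k: "1 \<le> Suc k" "Suc k \<le> 2 * M" using Suc.prems by auto
    have I: "\<forall>s\<in>P. Hs H0 k s \<in> D (Suc k)" "\<forall>s\<in>P. \<forall>s'\<in>P. pw s' s \<longrightarrow> pw (Hs H0 k s') (Hs H0 k s)"
      using inv[of k] Suc.prems by auto
    have I2: "\<forall>s\<in>P. Hs H0 (Suc k) s \<in> D (Suc (Suc k))" "\<forall>s\<in>P. \<forall>s'\<in>P. pw s' s \<longrightarrow> pw (Hs H0 (Suc k) s') (Hs H0 (Suc k) s)"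
      using inv[of "Suc k"] Suc.prems by auto
    define A where "A = (\<lambda>s. EE (Suc k) (Hs H0 k s))"
    have AP: "A ` P \<subseteq> P"
    proof (rule image_subsetI)
      fix x assume "x \<in> P"
      then have "A x \<in> Q" unfolding A_def using EE_Q[OF _ k] I(1) by blast
      then show "A x \<in> P" using QP by blast
    qed
    have Amono: "le (A x) (A y)" if "x \<in> P" "y \<in> P" "str_less x y" for x y
      unfolding A_def using EE_mono[OF _ _ k] I that str_less_pw lepw by meson
    have h1: "homotopic_with_canon (\<lambda>_. True) RR RR (push P A) (push P (Hs H0 k))"
    proof (rule homotopic_push[OF _ AP _ Amono])
      show "Hs H0 k ` P \<subseteq> P"
      proof (rule image_subsetI)
        fix x assume "x \<in> P"
        then have "Hs H0 k x \<in> Q" using I(1) D_Q by blast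
        then show "Hs H0 k x \<in> P" using QP by blast
      qed
      show "le (Hs H0 k x) (Hs H0 k y)" if "x \<in> P" "y \<in> P" "str_less x y" for x y
        using I that str_less_pw lepw by meson
      show "le (Hs H0 k x) (A x)" if "x \<in> P" for x
        unfolding A_def using EE_pw[OF _ k] I that lepw by meson
    qed
    have h2: "homotopic_with_canon (\<lambda>_. True) RR RR (push P A) (push P (Hs H0 (Suc k)))"
    proof (rule homotopic_push[OF _ AP _ Amono])
      show "Hs H0 (Suc k) ` P \<subseteq> P"
      proof (rule image_subsetI)
        fix x assume "x \<in> P"
        then have "Hs H0 (Suc k) x \<in> Q" using I2(1) D_Q by blast
        then show "Hs H0 (Suc k) x \<in> P" using QP by blast
      qed
      show "le (Hs H0 (Suc k) x) (Hs H0 (Suc k) y)" if "x \<in> P" "y \<in> P" "str_less x y" for x y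
        using I2 that str_less_pw lepw by meson
      show "le (Hs H0 (Suc k) x) (A x)" if "x \<in> P" for x
        unfolding A_def using CC_pw[OF _ k] I that lepw by simp
    qed
    have "homotopic_with_canon (\<lambda>_. True) RR RR (push P id) (push P (Hs H0 k))"
      by (rule Suc.IH) (use Suc.prems in simp)
    then show ?case
      using homotopic_with_trans[OF homotopic_with_trans[OF _ homotopic_with_symD[OF h1]] h2] by blast
  qed
  show ?thesis
  proof (cases "P = {}")
    case True
    then have "RR = {}" unfolding order_complex_realization_def by auto
    then show ?thesis by simp
  next
    case False
    then obtain s0 where s0: "s0 \<in> P" by blast
    have last: "\<forall>s\<in>P. Hs H0 (2 * M) s \<in> D (2 * M + 1)" using inv[of "2 * M"] by simp
    have "Hs H0 (2 * M) x = Hs H0 (2 * M) s0" if "x \<in> P" for x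
      using D_last_unique last that s0 by blast
    then show ?thesis using contractible_from[OF homk[OF order_refl]] by blast
  qed
qed

end

lemma UNIV_sym: "(UNIV :: sym set) = {Z0, O1, X}"
  by (auto intro: sym.exhaust)

lemma finite_len: "finite {s :: sym list. length s = n}"
proof -
  have "finite {xs :: sym list. set xs \<subseteq> UNIV \<and> length xs = n}"
    by (rule finite_lists_length_eq) (simp add: UNIV_sym)
  then show ?thesis by simp
qed

lemma finite_Str: "finite (Str N M)"
  by (rule finite_subset[OF _ finite_len[of N]]) (auto simp: Str_def)

theorem proposition5p5:
  fixes N M :: nat
  assumes "0 < M" and "2 * M < N"
  shows "contractible (order_complex_realization (Str00 N M) str_less)
       \<and> contractible (order_complex_realization (Str00bar N M) str_less)
       \<and> contractible (order_complex_realization (Str11 N M) str_less)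
       \<and> contractible (order_complex_realization (Str11bar N M) str_less)"
proof -
  interpret A: sset N M Z0 by unfold_locales (use assms in auto)
  interpret B: sset N M O1 by unfold_locales (use assms in auto)
  have e1: "Str00 N M = A.Q" by (simp add: Str00_def A.Q_def)
  have e2: "Str00bar N M = A.Qbar" by (simp add: Str00bar_def A.Qbar_def)
  have e3: "Str11 N M = B.Q" by (simp add: Str11_def B.Q_def)
  have e4: "Str11bar N M = B.Qbar" by (simp add: Str11bar_def B.Qbar_def)
  have fA: "finite A.Q" "finite A.Qbar" "finite B.Q" "finite B.Qbar"
    using finite_Str[of N M] by (auto simp: A.Q_def A.Qbar_def B.Q_def B.Qbar_def intro: finite_subset)
  have c1: "contractible (order_complex_realization A.Q str_less)"
    by (rule A.main_contr[OF fA(1)]) auto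
  have c2: "contractible (order_complex_realization A.Qbar str_less)"
    by (rule A.main_contr[of A.Qbar A.R, OF fA(2) A.Q_Qbar]) (auto intro: A.R_Q A.R_pw A.R_mono)
  have c3: "contractible (order_complex_realization B.Q str_less)"
    by (rule B.main_contr[OF fA(3)]) auto
  have c4: "contractible (order_complex_realization B.Qbar str_less)"
    by (rule B.main_contr[of B.Qbar B.R, OF fA(4) B.Q_Qbar]) (auto intro: B.R_Q B.R_pw B.R_mono)
  show ?thesis using c1 c2 c3 c4 e1 e2 e3 e4 by simp
qed


end
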